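(* Let $\mathbf{x}$ be a program variable of type $\{0,1\}^2$, $\mathbf{y}$ a program variable of type $\{0,1\}$, $\mathbf{w}$ an auxiliary program variable of type $\{0,1\}^2$, and $\mathbf{z}$ any program variable distinct from $\mathbf{x},\mathbf{y},\mathbf{w}$, all in $X_{\mathrm{all}}$. With $Z=\begin{pmatrix}1&0\\0&-1\end{pmatrix}$, $X=\begin{pmatrix}0&1\\1&0\end{pmatrix}$, define $\mathsf{Keygen} := \mathbf{init}\ \mathbf{x};\ \mathbf{apply}\ U_K\ \mathbf{to}\ \mathbf{x};\ \mathbf{init}\ \mathbf{w};\ \mathbf{apply}\ U_0\ \mathbf{to}\ \mathbf{w};\ \mathbf{apply}\ \mathrm{CNOT}\ \mathbf{to}\ \mathbf{x}\mathbf{w};\ \mathbf{init}\ \mathbf{w};\ \mathbf{apply}\ U_0\ \mathbf{to}\ \mathbf{w}$, $\mathsf{Enc} := \mathbf{apply}\ \big(\sum_{k\in\{0,1\}^2}|k\rangle\langle k|\otimes X^{k_2}Z^{k_1}\big)\ \mathbf{to}\ \mathbf{x}\mathbf{y}$, $\mathsf{Dec} := \mathbf{apply}\ \big(\sum_{k\in\{0,1\}^2}|k\rangle\langle k|\otimes Z^{k_1}X^{k_2}\big)\ \mathbf{to}\ \mathbf{x}\mathbf{y}$, where $U_K$ is an isometry with $U_K|00\rangle=\frac12\sum_k|k\rangle$, $U_0$ an isometry with $U_0|00\rangle=|00\rangle$, and $\mathrm{CNOT}|a\rangle|b\rangle=|a\rangle|a\oplus b\rangle$. Then for every quantum memory $\psi$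 over $\{\mathbf{y},\mathbf{z}\}$, $\{\mathbf{y}\mathbf{z}=_q\psi\}\ \mathsf{Keygen};\mathsf{Enc};\mathsf{Dec}\ \{\mathbf{y}\mathbf{z}=_q\psi\}$.
   Context: Variables: each variable has a type (a set containing a distinguished element $0$). Variables are of three disjoint kinds: program variables, entangled ghost variables, unentangled ghost variables. For a set $V$ of variables, $\ell^2[V]$ is the Hilbert space with orthonormal basis $|m\rangle$ indexed by assignments $m$ on $V$; elements are quantum memories over $V$; $\ell^2[V\cup W]\cong\ell^2[V]\otimes\ell^2[W]$ for disjoint $V,W$. A mixed memory over $V$ is a positive trace-class operator on $\ell^2[V]$; $\mathrm{tr}_W$ is the partial trace. "$M$ on $X$" denotes $M\otimes\mathrm{id}$ on the remaining variables. A mixed memory over $V\cup W$ is $(V,W)$-separable if it is a convergent sum $\sum_i\rho_i\otimes\rho_i'$ of mixed memories over $V$ and $W$. $\mathrm{supp}\,\rho$ is the closed span of the $\psi_i$ in any decomposition $\rho=\sum_i|\psi_i\rangle\langle\psi_i|$. A predicate over $V$ is a closed subspace of $\ell^2[V]$; $X=_q\psi$ denotes $\mathrm{span}\{\psi\}\otimes\ell^2[V\setminus X]$; predicates over different variable sets are identified if they agree after tensoring with the full spaces of the missing variables. Satisfaction: for program variables $X$, entangled ghosts $E$, unentangled ghosts $U$, predicate $A$ over $X\cup E\cup U$, a mixed memory $\rho$ over $X$ satisfies $A$ ($\rho\models A$) iff there is an $(X\cup E,U)$-separable mixed memory $\rho^\circ$ over $X\cup E\cup U$ with $\mathrm{supp}\,\rho^\circ\subseteq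 A$ and $\mathrm{tr}_{E\cup U}\rho^\circ=\rho$. Programs and semantics over the fixed set $X_{\mathrm{all}}$ of program variables: $[\![\mathbf{skip}]\!]=\mathrm{id}$, $[\![c;d]\!]=[\![d]\!]\circ[\![c]\!]$, $[\![\mathbf{apply}\ U\ \mathbf{to}\ X]\!](\rho)=(U\text{ on }X)\rho(U\text{ on }X)^*$ for an isometry $U$ on $\ell^2[X]$, $[\![\mathbf{init}\ x]\!](\rho)=\mathrm{tr}_x\rho\otimes|0\rangle\langle0|_x$. The Hoare judgment $\{A\}c\{B\}$ means: for all mixed memories $\rho$ over $X_{\mathrm{all}}$ with $\rho\models A$, $[\![c]\!](\rho)\models B$. *)

theory Defs
  imports "HOL-Analysis.Analysis"
begin

text \<open>
Variables have HOL type 'v, values live in a universe 'a.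
ty v is the type of variable v (a set of values) and zr v its distinguished element 0.
An assignment on a variable set V is represented canonically as a total function
m :: 'v => 'a with m v in ty v for v in V and m v = zr v for v outside V.
Quantum memories, operators and mixed memories are represented by their
coefficients / matrix entries w.r.t. the computational basis |m>.
\<close>

definition assigns :: "('v \<Rightarrow> 'a set) \<Rightarrow> ('v \<Rightarrow> 'a) \<Rightarrow> 'v set \<Rightarrow> ('v \<Rightarrow> 'a) set" where
  "assigns ty zr V = {m. (\<forall>v\<in>V. m v \<in> ty v) \<and> (\<forall>v. v \<notin> V \<longrightarrow> m v = zr v)}"

definition restr :: "('v \<Rightarrow> 'a) \<Rightarrow> 'v set \<Rightarrow> ('v \<Rightarrow> 'a) \<Rightarrow> ('v \<Rightarrow> 'a)" where
  "restr zr V m = (\<lambda>v. if v \<in> V then m v else zr v)"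

definition ell2 :: "('v \<Rightarrow> 'a set) \<Rightarrow> ('v \<Rightarrow> 'a) \<Rightarrow> 'v set \<Rightarrow> (('v \<Rightarrow> 'a) \<Rightarrow> complex) set" where
  "ell2 ty zr V = {f. (\<forall>m. f m \<noteq> 0 \<longrightarrow> m \<in> assigns ty zr V) \<and>
                      (\<lambda>m. (cmod (f m))\<^sup>2) summable_on UNIV}"

definition l2norm :: "(('v \<Rightarrow> 'a) \<Rightarrow> complex) \<Rightarrow> real" where
  "l2norm f = sqrt (infsum (\<lambda>m. (cmod (f m))\<^sup>2) UNIV)"

definition fspan :: "(('v \<Rightarrow> 'a) \<Rightarrow> complex) set \<Rightarrow> (('v \<Rightarrow> 'a) \<Rightarrow> complex) set" where
  "fspan S = {g. \<exists>F c. finite F \<and> F \<subseteq> S \<and> g = (\<lambda>m. \<Sum>s\<in>F. c s * s m)}"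

definition cspan :: "('v \<Rightarrow> 'a set) \<Rightarrow> ('v \<Rightarrow> 'a) \<Rightarrow> 'v set \<Rightarrow> (('v \<Rightarrow> 'a) \<Rightarrow> complex) set
    \<Rightarrow> (('v \<Rightarrow> 'a) \<Rightarrow> complex) set" where
  "cspan ty zr V S = {f \<in> ell2 ty zr V. \<forall>e>0. \<exists>g\<in>fspan S. l2norm (\<lambda>m. f m - g m) < e}"

text \<open>Tensor product of vectors over disjoint V, W (a vector over V \<union> W).\<close>
definition tensor_vec :: "('v \<Rightarrow> 'a set) \<Rightarrow> ('v \<Rightarrow> 'a) \<Rightarrow> 'v set \<Rightarrow> 'v set
    \<Rightarrow> (('v \<Rightarrow> 'a) \<Rightarrow> complex) \<Rightarrow> (('v \<Rightarrow> 'a) \<Rightarrow> complex) \<Rightarrow> (('v \<Rightarrow> 'a) \<Rightarrow> complex)" where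
  "tensor_vec ty zr V W f g = (\<lambda>m. if m \<in> assigns ty zr (V \<union> W)
      then f (restr zr V m) * g (restr zr W m) else 0)"

text \<open>Tensor product of operators (given by matrices) over disjoint V, W.\<close>
definition tensor_op :: "('v \<Rightarrow> 'a set) \<Rightarrow> ('v \<Rightarrow> 'a) \<Rightarrow> 'v set \<Rightarrow> 'v set
    \<Rightarrow> (('v \<Rightarrow> 'a) \<Rightarrow> ('v \<Rightarrow> 'a) \<Rightarrow> complex) \<Rightarrow> (('v \<Rightarrow> 'a) \<Rightarrow> ('v \<Rightarrow> 'a) \<Rightarrow> complex)
    \<Rightarrow> (('v \<Rightarrow> 'a) \<Rightarrow> ('v \<Rightarrow> 'a) \<Rightarrow> complex)" where
  "tensor_op ty zr V W A B = (\<lambda>m m'. if m \<in> assigns ty zr (V \<union> W) \<and> m' \<in> assigns ty zr (V \<union> W)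
      then A (restr zr V m) (restr zr V m') * B (restr zr W m) (restr zr W m') else 0)"

definition decomp :: "('v \<Rightarrow> 'a set) \<Rightarrow> ('v \<Rightarrow> 'a) \<Rightarrow> 'v set
    \<Rightarrow> (('v \<Rightarrow> 'a) \<Rightarrow> ('v \<Rightarrow> 'a) \<Rightarrow> complex) \<Rightarrow> (nat \<Rightarrow> ('v \<Rightarrow> 'a) \<Rightarrow> complex) \<Rightarrow> bool" where
  "decomp ty zr V \<rho> \<psi> \<longleftrightarrow> (\<forall>i. \<psi> i \<in> ell2 ty zr V) \<and> summable (\<lambda>i. (l2norm (\<psi> i))\<^sup>2) \<and>
     (\<forall>m m'. (\<lambda>i. \<psi> i m * cnj (\<psi> i m')) sums \<rho> m m')"

text \<open>Mixed memory over V = positive trace-class operator on ell2[V] (as matrix).\<close>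
definition is_mixed :: "('v \<Rightarrow> 'a set) \<Rightarrow> ('v \<Rightarrow> 'a) \<Rightarrow> 'v set
    \<Rightarrow> (('v \<Rightarrow> 'a) \<Rightarrow> ('v \<Rightarrow> 'a) \<Rightarrow> complex) \<Rightarrow> bool" where
  "is_mixed ty zr V \<rho> \<longleftrightarrow> (\<exists>\<psi>. decomp ty zr V \<rho> \<psi>)"

definition supp :: "('v \<Rightarrow> 'a set) \<Rightarrow> ('v \<Rightarrow> 'a) \<Rightarrow> 'v set
    \<Rightarrow> (('v \<Rightarrow> 'a) \<Rightarrow> ('v \<Rightarrow> 'a) \<Rightarrow> complex) \<Rightarrow> (('v \<Rightarrow> 'a) \<Rightarrow> complex) set" where
  "supp ty zr V \<rho> = cspan ty zr V (range (SOME \<psi>. decomp ty zr V \<rho> \<psi>))"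

text \<open>Partial trace over W of an operator over V \<union> W (V, W disjoint); result over V.\<close>
definition ptrace :: "('v \<Rightarrow> 'a set) \<Rightarrow> ('v \<Rightarrow> 'a) \<Rightarrow> 'v set \<Rightarrow> 'v set
    \<Rightarrow> (('v \<Rightarrow> 'a) \<Rightarrow> ('v \<Rightarrow> 'a) \<Rightarrow> complex) \<Rightarrow> (('v \<Rightarrow> 'a) \<Rightarrow> ('v \<Rightarrow> 'a) \<Rightarrow> complex)" where
  "ptrace ty zr V W \<rho> = (\<lambda>m m'. if m \<in> assigns ty zr V \<and> m' \<in> assigns ty zr V then
      infsum (\<lambda>n. \<rho> (\<lambda>v. if v \<in> W then n v else m v) (\<lambda>v. if v \<in> W then n v else m' v))
             (assigns ty zr W)
    else 0)"

definition separable :: "('v \<Rightarrow> 'a set) \<Rightarrow> ('v \<Rightarrow> 'a) \<Rightarrow> 'v set \<Rightarrow> 'v set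
    \<Rightarrow> (('v \<Rightarrow> 'a) \<Rightarrow> ('v \<Rightarrow> 'a) \<Rightarrow> complex) \<Rightarrow> bool" where
  "separable ty zr V W \<rho> \<longleftrightarrow> (\<exists>\<rho>1 \<rho>2. (\<forall>i. is_mixed ty zr V (\<rho>1 i) \<and> is_mixed ty zr W (\<rho>2 i)) \<and>
     (\<forall>m m'. (\<lambda>i. tensor_op ty zr V W (\<rho>1 i) (\<rho>2 i) m m') sums \<rho> m m'))"

text \<open>Predicate Y =_q psi over the variable set V (psi a memory over Y \<subseteq> V):
  span{psi} tensor ell2[V - Y], i.e. the closed span of the product vectors.\<close>
definition eqq :: "('v \<Rightarrow> 'a set) \<Rightarrow> ('v \<Rightarrow> 'a) \<Rightarrow> 'v set \<Rightarrow> 'v set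
    \<Rightarrow> (('v \<Rightarrow> 'a) \<Rightarrow> complex) \<Rightarrow> (('v \<Rightarrow> 'a) \<Rightarrow> complex) set" where
  "eqq ty zr V Y \<psi> = cspan ty zr V
     {tensor_vec ty zr Y (V - Y) (\<lambda>m. c * \<psi> m) g | c g. g \<in> ell2 ty zr (V - Y)}"

definition sat :: "('v \<Rightarrow> 'a set) \<Rightarrow> ('v \<Rightarrow> 'a) \<Rightarrow> 'v set \<Rightarrow> 'v set \<Rightarrow> 'v set
    \<Rightarrow> (('v \<Rightarrow> 'a) \<Rightarrow> ('v \<Rightarrow> 'a) \<Rightarrow> complex) \<Rightarrow> (('v \<Rightarrow> 'a) \<Rightarrow> complex) set \<Rightarrow> bool" where
  "sat ty zr X E U \<rho> A \<longleftrightarrow> (\<exists>\<rho>0. is_mixed ty zr (X \<union> E \<union> U) \<rho>0 \<and>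
      separable ty zr (X \<union> E) U \<rho>0 \<and> supp ty zr (X \<union> E \<union> U) \<rho>0 \<subseteq> A \<and>
      ptrace ty zr X (E \<union> U) \<rho>0 = \<rho>)"

text \<open>Isometry on ell2[V] given by its matrix K (K m n = <m|K|n>).\<close>
definition is_isometry :: "('v \<Rightarrow> 'a set) \<Rightarrow> ('v \<Rightarrow> 'a) \<Rightarrow> 'v set
    \<Rightarrow> (('v \<Rightarrow> 'a) \<Rightarrow> ('v \<Rightarrow> 'a) \<Rightarrow> complex) \<Rightarrow> bool" where
  "is_isometry ty zr V K \<longleftrightarrow>
     (\<forall>m n. K m n \<noteq> 0 \<longrightarrow> m \<in> assigns ty zr V \<and> n \<in> assigns ty zr V) \<and>
     (\<forall>n\<in>assigns ty zr V. (\<lambda>m. K m n) \<in> ell2 ty zr V) \<and>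
     (\<forall>n\<in>assigns ty zr V. \<forall>n'\<in>assigns ty zr V.
        infsum (\<lambda>m. cnj (K m n) * K m n') UNIV = (if n = n' then 1 else 0))"

definition lift_op :: "('v \<Rightarrow> 'a set) \<Rightarrow> ('v \<Rightarrow> 'a) \<Rightarrow> 'v set \<Rightarrow> 'v set
    \<Rightarrow> (('v \<Rightarrow> 'a) \<Rightarrow> ('v \<Rightarrow> 'a) \<Rightarrow> complex) \<Rightarrow> (('v \<Rightarrow> 'a) \<Rightarrow> ('v \<Rightarrow> 'a) \<Rightarrow> complex)" where
  "lift_op ty zr Xall X K = (\<lambda>m n. if m \<in> assigns ty zr Xall \<and> n \<in> assigns ty zr Xall \<and>
      (\<forall>v. v \<notin> X \<longrightarrow> m v = n v) then K (restr zr X m) (restr zr X n) else 0)"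

datatype ('v, 'a) prog =
    Skip
  | Seq "('v, 'a) prog" "('v, 'a) prog"
  | Apply "('v \<Rightarrow> 'a) \<Rightarrow> ('v \<Rightarrow> 'a) \<Rightarrow> complex" "'v set"
  | Init 'v

definition proj0 :: "('v \<Rightarrow> 'a) \<Rightarrow> (('v \<Rightarrow> 'a) \<Rightarrow> ('v \<Rightarrow> 'a) \<Rightarrow> complex)" where
  "proj0 zr = (\<lambda>m m'. if m = zr \<and> m' = zr then 1 else 0)"

primrec sem :: "('v \<Rightarrow> 'a set) \<Rightarrow> ('v \<Rightarrow> 'a) \<Rightarrow> 'v set \<Rightarrow> ('v, 'a) prog
    \<Rightarrow> (('v \<Rightarrow> 'a) \<Rightarrow> ('v \<Rightarrow> 'a) \<Rightarrow> complex) \<Rightarrow> (('v \<Rightarrow> 'a) \<Rightarrow> ('v \<Rightarrow> 'a) \<Rightarrow> complex)" where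
  "sem ty zr Xall Skip \<rho> = \<rho>"
| "sem ty zr Xall (Seq c d) \<rho> = sem ty zr Xall d (sem ty zr Xall c \<rho>)"
| "sem ty zr Xall (Apply K X) \<rho> =
     (let L = lift_op ty zr Xall X K in
      (\<lambda>m m'. infsum (\<lambda>n. L m n * infsum (\<lambda>n'. \<rho> n n' * cnj (L m' n')) UNIV) UNIV))"
| "sem ty zr Xall (Init x) \<rho> =
     tensor_op ty zr (Xall - {x}) {x} (ptrace ty zr (Xall - {x}) {x} \<rho>) (proj0 zr)"

text \<open>Hoare judgment over program variables Xall, entangled ghosts E, unentangled ghosts U.\<close>
definition hoare :: "('v \<Rightarrow> 'a set) \<Rightarrow> ('v \<Rightarrow> 'a) \<Rightarrow> 'v set \<Rightarrow> 'v set \<Rightarrow> 'v set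
    \<Rightarrow> (('v \<Rightarrow> 'a) \<Rightarrow> complex) set \<Rightarrow> ('v, 'a) prog \<Rightarrow> (('v \<Rightarrow> 'a) \<Rightarrow> complex) set \<Rightarrow> bool" where
  "hoare ty zr Xall E U A c B \<longleftrightarrow> (\<forall>\<rho>. is_mixed ty zr Xall \<rho> \<and> sat ty zr Xall E U \<rho> A \<longrightarrow>
      sat ty zr Xall E U (sem ty zr Xall c \<rho>) B)"

text \<open>Concrete gates. Bits: 0 = False, 1 = True; an element k of {0,1}^2 is (k1, k2).\<close>
definition xor2 :: "bool \<times> bool \<Rightarrow> bool \<times> bool \<Rightarrow> bool \<times> bool" where
  "xor2 a b = (fst a \<noteq> fst b, snd a \<noteq> snd b)"

definition cnotK :: "('v \<Rightarrow> 'a) \<Rightarrow> 'v \<Rightarrow> 'v \<Rightarrow> (bool \<times> bool \<Rightarrow> 'a) \<Rightarrow> (bool \<times> bool \<Rightarrow> 'a)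
    \<Rightarrow> ('v \<Rightarrow> 'a) \<Rightarrow> ('v \<Rightarrow> 'a) \<Rightarrow> complex" where
  "cnotK zr x w ex ew m n = (if \<exists>a b. n = zr(x := ex a, w := ew b) \<and> m = zr(x := ex a, w := ew (xor2 a b))
      then 1 else 0)"

definition Zm :: "bool \<Rightarrow> bool \<Rightarrow> complex" where
  "Zm b b' = (if b = b' then (if b then -1 else 1) else 0)"
definition Xm :: "bool \<Rightarrow> bool \<Rightarrow> complex" where
  "Xm b b' = (if b \<noteq> b' then 1 else 0)"
definition mmul :: "(bool \<Rightarrow> bool \<Rightarrow> complex) \<Rightarrow> (bool \<Rightarrow> bool \<Rightarrow> complex) \<Rightarrow> bool \<Rightarrow> bool \<Rightarrow> complex" where
  "mmul A B b b' = (\<Sum>c\<in>UNIV. A b c * B c b')"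
definition mpow :: "(bool \<Rightarrow> bool \<Rightarrow> complex) \<Rightarrow> bool \<Rightarrow> bool \<Rightarrow> bool \<Rightarrow> complex" where
  "mpow A k = (if k then A else (\<lambda>b b'. if b = b' then 1 else 0))"

text \<open>sum_k |k><k| (x) M k, acting on x y.\<close>
definition ctrlK :: "('v \<Rightarrow> 'a) \<Rightarrow> 'v \<Rightarrow> 'v \<Rightarrow> (bool \<times> bool \<Rightarrow> 'a) \<Rightarrow> (bool \<Rightarrow> 'a)
    \<Rightarrow> (bool \<times> bool \<Rightarrow> bool \<Rightarrow> bool \<Rightarrow> complex) \<Rightarrow> ('v \<Rightarrow> 'a) \<Rightarrow> ('v \<Rightarrow> 'a) \<Rightarrow> complex" where
  "ctrlK zr x y ex ey M m n = (\<Sum>(k, b, b')\<in>UNIV.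
      if m = zr(x := ex k, y := ey b) \<and> n = zr(x := ex k, y := ey b') then M k b b' else 0)"

definition encM :: "bool \<times> bool \<Rightarrow> bool \<Rightarrow> bool \<Rightarrow> complex" where
  "encM k = mmul (mpow Xm (snd k)) (mpow Zm (fst k))"
definition decM :: "bool \<times> bool \<Rightarrow> bool \<Rightarrow> bool \<Rightarrow> complex" where
  "decM k = mmul (mpow Zm (fst k)) (mpow Xm (snd k))"

end

theory Submission
  imports Defs
begin

lemma ell2_sq_summable: "f \<in> ell2 ty zr V \<Longrightarrow> (\<lambda>m. (cmod (f m))\<^sup>2) summable_on UNIV"
  by (simp add: ell2_def)

lemma ell2_supp: "f \<in> ell2 ty zr V \<Longrightarrow> f m \<noteq> 0 \<Longrightarrow> m \<in> assigns ty zr V"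
  by (simp add: ell2_def)

lemma pointwise_sq_le:
  assumes "(\<lambda>m. (cmod (f m))\<^sup>2) summable_on UNIV"
  shows "(cmod (f m))\<^sup>2 \<le> infsum (\<lambda>m. (cmod (f m))\<^sup>2) UNIV"
proof -
  have "sum (\<lambda>m. (cmod (f m))\<^sup>2) {m} \<le> infsum (\<lambda>m. (cmod (f m))\<^sup>2) UNIV"
    by (rule finite_sum_le_infsum[OF assms]) auto
  then show ?thesis by simp
qed

lemma l2norm_sq:
  shows "(l2norm f)\<^sup>2 = infsum (\<lambda>m. (cmod (f m))\<^sup>2) UNIV"
  unfolding l2norm_def by (simp add: infsum_nonneg)

lemma pointwise_le_l2norm:
  assumes "(\<lambda>m. (cmod (f m))\<^sup>2) summable_on UNIV"
  shows "cmod (f m) \<le> l2norm f"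
  unfolding l2norm_def
  using pointwise_sq_le[OF assms, of m] real_le_rsqrt by blast

lemma sq_summable_add:
  fixes f g :: "'b \<Rightarrow> complex"
  assumes "(\<lambda>m. (cmod (f m))\<^sup>2) summable_on UNIV" "(\<lambda>m. (cmod (g m))\<^sup>2) summable_on UNIV"
  shows "(\<lambda>m. (cmod (f m + g m))\<^sup>2) summable_on UNIV"
proof -
  have s: "(\<lambda>m. 2 * (cmod (f m))\<^sup>2 + 2 * (cmod (g m))\<^sup>2) summable_on UNIV"
    by (intro summable_on_add summable_on_cmult_right assms)
  show ?thesis
  proof (rule summable_on_comparison_test[OF s])
    fix m
    have "cmod (f m + g m) \<le> cmod (f m) + cmod (g m)" by (rule norm_triangle_ineq)
    then have "(cmod (f m + g m))\<^sup>2 \<le> (cmod (f m) + cmod (g m))\<^sup>2"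
      by (simp add: power_mono)
    also have "\<dots> \<le> 2 * (cmod (f m))\<^sup>2 + 2 * (cmod (g m))\<^sup>2"
      by (smt (verit, best) sum_squares_bound power2_sum)
    finally show "(cmod (f m + g m))\<^sup>2 \<le> 2 * (cmod (f m))\<^sup>2 + 2 * (cmod (g m))\<^sup>2" .
  qed simp
qed

lemma sq_summable_cmult:
  fixes f :: "'b \<Rightarrow> complex"
  assumes "(\<lambda>m. (cmod (f m))\<^sup>2) summable_on UNIV"
  shows "(\<lambda>m. (cmod (c * f m))\<^sup>2) summable_on UNIV"
  using summable_on_cmult_right[OF assms, of "(cmod c)\<^sup>2"]
  by (simp add: norm_mult power_mult_distrib)

lemma ell2_add: "f \<in> ell2 ty zr V \<Longrightarrow> g \<in> ell2 ty zr V \<Longrightarrow> (\<lambda>m. f m + g m) \<in> ell2 ty zr V"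
proof -
  assume a: "f \<in> ell2 ty zr V" "g \<in> ell2 ty zr V"
  then have "(\<lambda>m. (cmod (f m + g m))\<^sup>2) summable_on UNIV"
    by (intro sq_summable_add) (auto simp: ell2_def)
  with a show ?thesis unfolding ell2_def by force
qed

lemma ell2_cmult: "f \<in> ell2 ty zr V \<Longrightarrow> (\<lambda>m. c * f m) \<in> ell2 ty zr V"
proof -
  assume a: "f \<in> ell2 ty zr V"
  then have "(\<lambda>m. (cmod (c * f m))\<^sup>2) summable_on UNIV"
    by (intro sq_summable_cmult) (auto simp: ell2_def)
  with a show ?thesis unfolding ell2_def by force
qed

lemma ell2_zero: "(\<lambda>m. 0) \<in> ell2 ty zr V"
  unfolding ell2_def by simp

lemma ell2_diff: "f \<in> ell2 ty zr V \<Longrightarrow> g \<in> ell2 ty zr V \<Longrightarrow> (\<lambda>m. f m - g m) \<in> ell2 ty zr V"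
  using ell2_add[of f ty zr V "\<lambda>m. (-1) * g m"] ell2_cmult[of g ty zr V "-1"] by simp

lemma ell2_sum: "finite F \<Longrightarrow> (\<And>s. s \<in> F \<Longrightarrow> h s \<in> ell2 ty zr V) \<Longrightarrow> (\<lambda>m. \<Sum>s\<in>F. h s m) \<in> ell2 ty zr V"
proof (induction F rule: finite_induct)
  case empty then show ?case by (simp add: ell2_zero)
next
  case (insert a F) then show ?case by (simp add: ell2_add)
qed

lemma fspan_ell2: "S \<subseteq> ell2 ty zr V \<Longrightarrow> fspan S \<subseteq> ell2 ty zr V"
  unfolding fspan_def
  by (auto intro!: ell2_sum ell2_cmult)

definition agree :: "('v \<Rightarrow> 'a set) \<Rightarrow> ('v \<Rightarrow> 'a) \<Rightarrow> 'v set \<Rightarrow> 'v set \<Rightarrow> ('v \<Rightarrow> 'a) \<Rightarrow> ('v \<Rightarrow> 'a) \<Rightarrow> bool" where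
  "agree ty zr W Y m m' \<longleftrightarrow> m \<in> assigns ty zr W \<and> m' \<in> assigns ty zr W \<and> (\<forall>v. v \<notin> Y \<longrightarrow> m v = m' v)"

definition Pset :: "('v \<Rightarrow> 'a set) \<Rightarrow> ('v \<Rightarrow> 'a) \<Rightarrow> 'v set \<Rightarrow> 'v set \<Rightarrow> (('v \<Rightarrow> 'a) \<Rightarrow> complex) \<Rightarrow> (('v \<Rightarrow> 'a) \<Rightarrow> complex) set" where
  "Pset ty zr W Y \<psi> = {f \<in> ell2 ty zr W. (\<forall>m m'. agree ty zr W Y m m' \<longrightarrow> f m * \<psi> (restr zr Y m') = f m' * \<psi> (restr zr Y m))
      \<and> (\<psi> = (\<lambda>_. 0) \<longrightarrow> f = (\<lambda>_. 0))}"

lemma fspan_Pset: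
  assumes "S \<subseteq> Pset ty zr W Y \<psi>"
  shows "fspan S \<subseteq> Pset ty zr W Y \<psi>"
proof
  fix g assume "g \<in> fspan S"
  then obtain F c where F: "finite F" "F \<subseteq> S" "g = (\<lambda>m. \<Sum>s\<in>F. c s * s m)"
    unfolding fspan_def by blast
  have ell: "g \<in> ell2 ty zr W"
    using F assms fspan_ell2[of S ty zr W] unfolding fspan_def Pset_def by blast
  have lin: "g m * \<psi> (restr zr Y m') = g m' * \<psi> (restr zr Y m)" if "agree ty zr W Y m m'" for m m'
  proof -
    have "g m * \<psi> (restr zr Y m') = (\<Sum>s\<in>F. c s * (s m * \<psi> (restr zr Y m')))"
      by (simp add: F(3) sum_distrib_right mult.assoc)
    also have "\<dots> = (\<Sum>s\<in>F. c s * (s m' * \<psi> (restr zr Y m)))"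
      using F(2) assms that unfolding Pset_def by (intro sum.cong) auto
    also have "\<dots> = g m' * \<psi> (restr zr Y m)"
      by (simp add: F(3) sum_distrib_right mult.assoc)
    finally show ?thesis .
  qed
  have z: "\<psi> = (\<lambda>_. 0) \<Longrightarrow> g = (\<lambda>_. 0)"
  proof -
    assume "\<psi> = (\<lambda>_. 0)"
    then have "\<forall>s\<in>F. s = (\<lambda>_. 0)" using F(2) assms unfolding Pset_def by auto
    then show ?thesis unfolding F(3) by (intro ext sum.neutral) auto
  qed
  show "g \<in> Pset ty zr W Y \<psi>" using ell lin z unfolding Pset_def by blast
qed

lemma small_zero:
  fixes D :: real
  assumes "D \<ge> 0" "C \<ge> 0" "\<And>e. e > 0 \<Longrightarrow> D \<le> e * C"
  shows "D = 0"
proof (rule ccontr)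
  assume "D \<noteq> 0"
  then have Dp: "D > 0" using assms by simp
  define e where "e = D / (2 * (C + 1))"
  have ep: "e > 0" using Dp assms by (simp add: e_def)
  have "D \<le> e * C" using assms(3)[OF ep] .
  also have "e * C < D"
  proof -
    have "e * C \<le> e * (C + 1)" using ep by simp
    also have "\<dots> = D / 2" using assms by (simp add: e_def field_simps)
    finally show ?thesis using Dp by simp
  qed
  finally show False by simp
qed

lemma cspan_Pset:
  assumes "S \<subseteq> Pset ty zr W Y \<psi>"
  shows "cspan ty zr W S \<subseteq> Pset ty zr W Y \<psi>"
proof
  fix f assume f: "f \<in> cspan ty zr W S"
  have fe: "f \<in> ell2 ty zr W" using f unfolding cspan_def by blast
  have approx: "\<exists>g\<in>fspan S. l2norm (\<lambda>m. f m - g m) < e" if "e > 0" for e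
    using f that unfolding cspan_def by blast
  have FP: "fspan S \<subseteq> Pset ty zr W Y \<psi>" by (rule fspan_Pset[OF assms])
  have bound: "cmod (f m - g m) \<le> l2norm (\<lambda>m. f m - g m)" if "g \<in> fspan S" for g m
  proof -
    have "g \<in> ell2 ty zr W" using FP that unfolding Pset_def by blast
    then have "(\<lambda>m. f m - g m) \<in> ell2 ty zr W" using fe by (rule ell2_diff[rotated])
    then show ?thesis using pointwise_le_l2norm[of "\<lambda>m. f m - g m"] unfolding ell2_def by blast
  qed
  have lin: "f m * \<psi> (restr zr Y m') = f m' * \<psi> (restr zr Y m)" if ag: "agree ty zr W Y m m'" for m m'
  proof -
    define a where "a = \<psi> (restr zr Y m)"
    define b where "b = \<psi> (restr zr Y m')"
    have "cmod (f m * b - f m' * a) = 0"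
    proof (rule small_zero)
      show "0 \<le> cmod (f m * b - f m' * a)" by simp
      show "0 \<le> cmod a + cmod b" by simp
      fix e :: real assume "e > 0"
      then obtain g where g: "g \<in> fspan S" "l2norm (\<lambda>m. f m - g m) < e" using approx by blast
      have gl: "g m * b = g m' * a" using FP g(1) ag unfolding Pset_def a_def b_def by blast
      have "f m * b - f m' * a = (f m - g m) * b - (f m' - g m') * a"
        using gl by (simp add: algebra_simps)
      then have "cmod (f m * b - f m' * a) \<le> cmod (f m - g m) * cmod b + cmod (f m' - g m') * cmod a"
        by (metis norm_diff_ineq norm_mult norm_triangle_ineq4 order_trans)
      also have "\<dots> \<le> e * cmod b + e * cmod a"
        using bound[OF g(1), of m] bound[OF g(1), of m'] g(2)
        by (intro add_mono mult_right_mono) auto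
      finally show "cmod (f m * b - f m' * a) \<le> e * (cmod a + cmod b)"
        by (simp add: algebra_simps)
    qed
    then show ?thesis by (simp add: a_def b_def)
  qed
  have z: "f = (\<lambda>_. 0)" if "\<psi> = (\<lambda>_. 0)"
  proof
    fix m
    have "cmod (f m) = 0"
    proof (rule small_zero)
      show "0 \<le> cmod (f m)" "(0::real) \<le> 1" by auto
      fix e :: real assume "e > 0"
      then obtain g where g: "g \<in> fspan S" "l2norm (\<lambda>m. f m - g m) < e" using approx by blast
      have "g = (\<lambda>_. 0)" using FP g(1) that unfolding Pset_def by blast
      then show "cmod (f m) \<le> e * 1" using bound[OF g(1), of m] g(2) by simp
    qed
    then show "f m = 0" by simp
  qed
  show "f \<in> Pset ty zr W Y \<psi>" using fe lin z unfolding Pset_def by blast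
qed

lemma decomp_in_cspan:
  assumes "decomp ty zr W \<rho> \<theta>"
  shows "\<theta> i \<in> cspan ty zr W (range \<theta>)"
proof -
  have e: "\<theta> i \<in> ell2 ty zr W" using assms unfolding decomp_def by blast
  have "\<theta> i \<in> fspan (range \<theta>)"
    unfolding fspan_def by (rule CollectI, rule exI[of _ "{\<theta> i}"], rule exI[of _ "\<lambda>_. 1"]) auto
  moreover have "l2norm (\<lambda>m. \<theta> i m - \<theta> i m) = 0" by (simp add: l2norm_def)
  ultimately show ?thesis using e unfolding cspan_def by force
qed

lemma restr_in_assigns: "m \<in> assigns ty zr W \<Longrightarrow> V \<subseteq> W \<Longrightarrow> restr zr V m \<in> assigns ty zr V"
  unfolding assigns_def restr_def by auto

lemma tensor_gen_Pset:
  assumes Y: "Y \<subseteq> W" and psi: "\<psi> \<in> ell2 ty zr Y" and g: "g \<in> ell2 ty zr (W - Y)"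
  shows "tensor_vec ty zr Y (W - Y) (\<lambda>m. c * \<psi> m) g \<in> Pset ty zr W Y \<psi>"
proof -
  let ?t = "tensor_vec ty zr Y (W - Y) (\<lambda>m. c * \<psi> m) g"
  have UW: "Y \<union> (W - Y) = W" using Y by blast
  define G where "G = (\<lambda>(a, r). (cmod (c * \<psi> a))\<^sup>2 * (cmod (g r))\<^sup>2)"
  have ps: "(\<lambda>a. (cmod (c * \<psi> a))\<^sup>2) summable_on UNIV"
    using sq_summable_cmult[OF ell2_sq_summable[OF psi]] .
  have gs: "(\<lambda>r. (cmod (g r))\<^sup>2) summable_on UNIV" using ell2_sq_summable[OF g] .
  have GS: "G summable_on Sigma UNIV (\<lambda>_. UNIV)"
  proof (rule summable_on_SigmaI)
    show "((\<lambda>r. G (a, r)) has_sum ((cmod (c * \<psi> a))\<^sup>2 * infsum (\<lambda>r. (cmod (g r))\<^sup>2) UNIV)) UNIV" for a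
      unfolding G_def by (simp add: has_sum_cmult_right gs)
    show "(\<lambda>a. (cmod (c * \<psi> a))\<^sup>2 * infsum (\<lambda>r. (cmod (g r))\<^sup>2) UNIV) summable_on UNIV"
      using summable_on_cmult_left[OF ps] by simp
    show "\<And>a r. a \<in> UNIV \<Longrightarrow> r \<in> UNIV \<Longrightarrow> 0 \<le> G (a, r)" unfolding G_def by simp
  qed
  define h where "h m = (restr zr Y m, restr zr (W - Y) m)" for m
  have inj: "inj_on h (assigns ty zr W)"
  proof
    fix m m' assume "m \<in> assigns ty zr W" "m' \<in> assigns ty zr W" "h m = h m'"
    note a = this
    show "m = m'"
    proof
      fix v
      have e1: "restr zr Y m v = restr zr Y m' v" "restr zr (W - Y) m v = restr zr (W - Y) m' v"
        using a(3) unfolding h_def by auto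
      show "m v = m' v"
      proof (cases "v \<in> W")
        case True then show ?thesis using e1 unfolding restr_def by (cases "v \<in> Y") auto
      next
        case False then show ?thesis using a(1,2) unfolding assigns_def by auto
      qed
    qed
  qed
  have "G summable_on h ` assigns ty zr W"
    by (rule summable_on_subset[OF GS]) auto
  then have s1: "(G \<circ> h) summable_on assigns ty zr W" using summable_on_reindex[OF inj] by blast
  have sq: "(\<lambda>m. (cmod (?t m))\<^sup>2) summable_on UNIV"
  proof (rule summable_on_cong_neutral[THEN iffD1, OF _ _ _ s1])
    show "\<And>m. m \<in> UNIV - assigns ty zr W \<Longrightarrow> (cmod (?t m))\<^sup>2 = 0"
      unfolding tensor_vec_def using UW by auto
    show "\<And>m. m \<in> assigns ty zr W \<inter> UNIV \<Longrightarrow> (G \<circ> h) m = (cmod (?t m))\<^sup>2"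
      unfolding tensor_vec_def G_def h_def using UW by (auto simp: norm_mult power_mult_distrib)
  qed simp
  have ell: "?t \<in> ell2 ty zr W"
    unfolding ell2_def using sq UW by (auto simp: tensor_vec_def split: if_splits)
  have lin: "?t m * \<psi> (restr zr Y m') = ?t m' * \<psi> (restr zr Y m)" if "agree ty zr W Y m m'" for m m'
  proof -
    have r: "restr zr (W - Y) m = restr zr (W - Y) m'" using that unfolding agree_def restr_def by auto
    show ?thesis using that r UW unfolding agree_def tensor_vec_def by simp
  qed
  have z: "\<psi> = (\<lambda>_. 0) \<Longrightarrow> ?t = (\<lambda>_. 0)" unfolding tensor_vec_def by auto
  show ?thesis unfolding Pset_def using ell lin z by blast
qed

lemma eqq_Pset:
  assumes Y: "Y \<subseteq> W" and psi: "\<psi> \<in> ell2 ty zr Y"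
  shows "eqq ty zr W Y \<psi> \<subseteq> Pset ty zr W Y \<psi>"
  unfolding eqq_def by (rule cspan_Pset) (use tensor_gen_Pset[OF Y psi] in blast)

lemma l2norm_zero[simp]: "l2norm (\<lambda>m. 0) = 0" by (simp add: l2norm_def)

lemma Pset_eqq:
  assumes Y: "Y \<subseteq> W" and psi: "\<psi> \<in> ell2 ty zr Y" and types: "\<forall>v. zr v \<in> ty v"
  shows "Pset ty zr W Y \<psi> \<subseteq> eqq ty zr W Y \<psi>"
proof
  fix f assume fP: "f \<in> Pset ty zr W Y \<psi>"
  have fe: "f \<in> ell2 ty zr W" using fP unfolding Pset_def by blast
  let ?S = "{tensor_vec ty zr Y (W - Y) (\<lambda>m. c * \<psi> m) g |c g. g \<in> ell2 ty zr (W - Y)}"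
  have UW: "Y \<union> (W - Y) = W" using Y by blast
  show "f \<in> eqq ty zr W Y \<psi>"
  proof (cases "\<psi> = (\<lambda>_. 0)")
    case True
    then have "f = (\<lambda>_. 0)" using fP unfolding Pset_def by blast
    moreover have "(\<lambda>_. 0) \<in> fspan ?S"
      unfolding fspan_def by (rule CollectI, rule exI[of _ "{}"]) auto
    ultimately show ?thesis unfolding eqq_def cspan_def using fe by force
  next
    case False
    then obtain b0 where b0: "\<psi> b0 \<noteq> 0" by auto
    have b0a: "b0 \<in> assigns ty zr Y" using ell2_supp[OF psi b0] .
    define mg where "mg r = (\<lambda>v. if v \<in> Y then b0 v else r v)" for r :: "'a \<Rightarrow> 'b"
    define h where "h r = (if r \<in> assigns ty zr (W - Y) then f (mg r) / \<psi> b0 else 0)" for r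
    have inj: "inj_on mg (assigns ty zr (W - Y))"
    proof
      fix r r' assume "r \<in> assigns ty zr (W - Y)" "r' \<in> assigns ty zr (W - Y)" "mg r = mg r'"
      note a = this
      show "r = r'"
      proof
        fix v
        have "mg r v = mg r' v" using a(3) by simp
        then show "r v = r' v" using a(1,2) unfolding mg_def assigns_def by (cases "v \<in> Y") auto
      qed
    qed
    have fs: "(\<lambda>m. (cmod (f m))\<^sup>2) summable_on mg ` assigns ty zr (W - Y)"
      by (rule summable_on_subset[OF ell2_sq_summable[OF fe]]) auto
    then have "((\<lambda>m. (cmod (f m))\<^sup>2) \<circ> mg) summable_on assigns ty zr (W - Y)"
      using summable_on_reindex[OF inj] by blast
    then have s2: "(\<lambda>r. (cmod (f (mg r)))\<^sup>2 * (1 / (cmod (\<psi> b0))\<^sup>2)) summable_on assigns ty zr (W - Y)"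
      by (intro summable_on_cmult_left) (simp add: o_def)
    have hs: "(\<lambda>r. (cmod (h r))\<^sup>2) summable_on UNIV"
    proof (rule summable_on_cong_neutral[THEN iffD1, OF _ _ _ s2])
      show "\<And>r. r \<in> UNIV - assigns ty zr (W - Y) \<Longrightarrow> (cmod (h r))\<^sup>2 = 0"
        unfolding h_def by simp
      show "\<And>r. r \<in> assigns ty zr (W - Y) \<inter> UNIV \<Longrightarrow>
          (cmod (f (mg r)))\<^sup>2 * (1 / (cmod (\<psi> b0))\<^sup>2) = (cmod (h r))\<^sup>2"
        unfolding h_def by (simp add: norm_divide power_divide)
    qed simp
    have he: "h \<in> ell2 ty zr (W - Y)"
    proof -
      have "\<forall>r. h r \<noteq> 0 \<longrightarrow> r \<in> assigns ty zr (W - Y)" unfolding h_def by simp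
      then show ?thesis unfolding ell2_def using hs by blast
    qed
    have feq: "f = tensor_vec ty zr Y (W - Y) (\<lambda>m. 1 * \<psi> m) h"
    proof
      fix m
      show "f m = tensor_vec ty zr Y (W - Y) (\<lambda>m. 1 * \<psi> m) h m"
      proof (cases "m \<in> assigns ty zr W")
        case False
        then have "f m = 0" using ell2_supp[OF fe] by blast
        then show ?thesis using False UW unfolding tensor_vec_def by simp
      next
        case True
        have ra: "restr zr (W - Y) m \<in> assigns ty zr (W - Y)" by (rule restr_in_assigns[OF True]) auto
        define m' where "m' = mg (restr zr (W - Y) m)"
        have m'a: "m' \<in> assigns ty zr W"
          using True b0a Y types unfolding m'_def mg_def restr_def assigns_def by auto
        have ag: "agree ty zr W Y m m'"
          using True m'a unfolding agree_def m'_def mg_def restr_def assigns_def by auto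
        have rb: "restr zr Y m' = b0"
          using b0a unfolding m'_def mg_def restr_def assigns_def by (auto simp: fun_eq_iff)
        have linf: "\<forall>m m'. agree ty zr W Y m m' \<longrightarrow> f m * \<psi> (restr zr Y m') = f m' * \<psi> (restr zr Y m)"
          using fP unfolding Pset_def by blast
        have "f m * \<psi> b0 = f m' * \<psi> (restr zr Y m)"
          using linf ag rb by metis
        then have "f m = \<psi> (restr zr Y m) * (f m' / \<psi> b0)"
          using b0 by (simp add: field_simps)
        moreover have "h (restr zr (W - Y) m) = f m' / \<psi> b0"
          using ra unfolding h_def m'_def by simp
        moreover have "m \<in> assigns ty zr (Y \<union> (W - Y))" using True UW by simp
        ultimately show ?thesis unfolding tensor_vec_def by simp
      qed
    qed
    have fS: "f \<in> ?S" using feq he by blast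
    have "f \<in> fspan ?S"
      unfolding fspan_def by (rule CollectI, rule exI[of _ "{f}"], rule exI[of _ "\<lambda>_. 1"]) (use fS in auto)
    then show ?thesis unfolding eqq_def cspan_def using fe by force
  qed
qed

definition Rel :: "('v \<Rightarrow> 'a set) \<Rightarrow> ('v \<Rightarrow> 'a) \<Rightarrow> 'v set \<Rightarrow> 'v set \<Rightarrow> (('v \<Rightarrow> 'a) \<Rightarrow> complex)
   \<Rightarrow> (('v \<Rightarrow> 'a) \<Rightarrow> ('v \<Rightarrow> 'a) \<Rightarrow> complex) \<Rightarrow> bool" where
  "Rel ty zr W Y \<psi> \<rho> \<longleftrightarrow> (\<forall>m m' p. agree ty zr W Y m m' \<longrightarrow> \<rho> m p * \<psi> (restr zr Y m') = \<rho> m' p * \<psi> (restr zr Y m))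
      \<and> (\<psi> = (\<lambda>_. 0) \<longrightarrow> (\<forall>m p. \<rho> m p = 0))"

lemma decomp_sums: "decomp ty zr W \<rho> \<theta> \<Longrightarrow> (\<lambda>i. \<theta> i m * cnj (\<theta> i p)) sums \<rho> m p"
  unfolding decomp_def by blast

lemma decomp_ell2: "decomp ty zr W \<rho> \<theta> \<Longrightarrow> \<theta> i \<in> ell2 ty zr W"
  unfolding decomp_def by blast

lemma decomp_supp:
  assumes "decomp ty zr W \<rho> \<theta>" "\<rho> m p \<noteq> 0"
  shows "m \<in> assigns ty zr W \<and> p \<in> assigns ty zr W"
proof (rule ccontr)
  assume "\<not> ?thesis"
  then have "\<forall>i. \<theta> i m * cnj (\<theta> i p) = 0"
    using ell2_supp[OF decomp_ell2[OF assms(1)]] by (metis complex_cnj_zero_iff mult_eq_0_iff)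
  then have "(\<lambda>i. \<theta> i m * cnj (\<theta> i p)) = (\<lambda>i. 0)" by (intro ext) simp
  then have "(\<lambda>i. \<theta> i m * cnj (\<theta> i p)) sums 0" by simp
  then show False using decomp_sums[OF assms(1)] assms(2) sums_unique2 by metis
qed

lemma D1:
  assumes dec: "decomp ty zr W \<rho> \<theta>" and P: "\<And>i. \<theta> i \<in> Pset ty zr W Y \<psi>"
  shows "Rel ty zr W Y \<psi> \<rho>"
proof -
  have lin: "\<rho> m p * \<psi> (restr zr Y m') = \<rho> m' p * \<psi> (restr zr Y m)" if ag: "agree ty zr W Y m m'" for m m' p
  proof -
    have s1: "(\<lambda>i. \<theta> i m * cnj (\<theta> i p) * \<psi> (restr zr Y m')) sums (\<rho> m p * \<psi> (restr zr Y m'))"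
      by (rule sums_mult2[OF decomp_sums[OF dec]])
    have s2: "(\<lambda>i. \<theta> i m' * cnj (\<theta> i p) * \<psi> (restr zr Y m)) sums (\<rho> m' p * \<psi> (restr zr Y m))"
      by (rule sums_mult2[OF decomp_sums[OF dec]])
    have eq: "\<theta> i m * cnj (\<theta> i p) * \<psi> (restr zr Y m') = \<theta> i m' * cnj (\<theta> i p) * \<psi> (restr zr Y m)" for i
    proof -
      have "\<theta> i m * \<psi> (restr zr Y m') = \<theta> i m' * \<psi> (restr zr Y m)"
        using P[of i] ag unfolding Pset_def by blast
      then show ?thesis by (metis mult.commute mult.left_commute)
    qed
    show ?thesis using s1 s2 unfolding eq using sums_unique2 by blast
  qed
  have z: "\<rho> m p = 0" if "\<psi> = (\<lambda>_. 0)" for m p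
  proof -
    have "\<theta> i = (\<lambda>_. 0)" for i using P[of i] that unfolding Pset_def by blast
    then have "(\<lambda>i. \<theta> i m * cnj (\<theta> i p)) sums 0" by simp
    then show ?thesis using decomp_sums[OF dec] sums_unique2 by blast
  qed
  show ?thesis unfolding Rel_def using lin z by blast
qed

lemma sums_sq_zero:
  fixes l :: "nat \<Rightarrow> complex"
  assumes "(\<lambda>i. l i * cnj (l i)) sums 0"
  shows "l i = 0"
proof -
  have e: "(\<lambda>i. l i * cnj (l i)) = (\<lambda>i. complex_of_real ((cmod (l i))\<^sup>2))"
    by (intro ext) (rule complex_norm_square[symmetric])
  have "(\<lambda>i. complex_of_real ((cmod (l i))\<^sup>2)) sums complex_of_real 0"
    using assms unfolding e of_real_0 .
  then have s: "(\<lambda>i. (cmod (l i))\<^sup>2) sums 0" by (simp only: sums_of_real_iff)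
  have sm: "summable (\<lambda>i. (cmod (l i))\<^sup>2)" using s by (rule sums_summable)
  have "suminf (\<lambda>i. (cmod (l i))\<^sup>2) = 0" using s by (rule sums_unique[symmetric])
  then have "\<forall>n. (cmod (l n))\<^sup>2 = 0"
    using suminf_eq_zero_iff[OF sm] by simp
  then show ?thesis by simp
qed

lemma D2:
  assumes dec: "decomp ty zr W \<rho> \<theta>" and R: "Rel ty zr W Y \<psi> \<rho>"
  shows "\<theta> i \<in> Pset ty zr W Y \<psi>"
proof -
  have lin: "\<theta> i m * \<psi> (restr zr Y m') = \<theta> i m' * \<psi> (restr zr Y m)" if ag: "agree ty zr W Y m m'" for m m'
  proof -
    define a where "a = \<psi> (restr zr Y m)"
    define b where "b = \<psi> (restr zr Y m')"
    define l where "l j = \<theta> j m * b - \<theta> j m' * a" for j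
    have r1: "\<rho> m m * b = \<rho> m' m * a" and r2: "\<rho> m m' * b = \<rho> m' m' * a"
      using R ag unfolding Rel_def a_def b_def by blast+
    have ex: "l j * cnj (l j) = \<theta> j m * cnj (\<theta> j m) * (b * cnj b) - \<theta> j m * cnj (\<theta> j m') * (b * cnj a)
       - (\<theta> j m' * cnj (\<theta> j m) * (a * cnj b) - \<theta> j m' * cnj (\<theta> j m') * (a * cnj a))" for j
      unfolding l_def by (simp add: algebra_simps)
    have "(\<lambda>j. l j * cnj (l j)) sums (\<rho> m m * (b * cnj b) - \<rho> m m' * (b * cnj a)
        - (\<rho> m' m * (a * cnj b) - \<rho> m' m' * (a * cnj a)))"
      unfolding ex by (intro sums_diff sums_mult2 decomp_sums[OF dec])
    moreover have "\<rho> m m * (b * cnj b) - \<rho> m m' * (b * cnj a)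
        - (\<rho> m' m * (a * cnj b) - \<rho> m' m' * (a * cnj a)) = 0"
    proof -
      have h1: "\<rho> m m * (b * cnj b) = \<rho> m' m * (a * cnj b)" using r1 by (metis mult.assoc)
      have h2: "\<rho> m m' * (b * cnj a) = \<rho> m' m' * (a * cnj a)" using r2 by (metis mult.assoc)
      show ?thesis unfolding h1 h2 by simp
    qed
    ultimately have "(\<lambda>j. l j * cnj (l j)) sums 0" by simp
    then have "l i = 0" by (rule sums_sq_zero)
    then show ?thesis unfolding l_def a_def b_def by simp
  qed
  have z: "\<theta> i = (\<lambda>_. 0)" if "\<psi> = (\<lambda>_. 0)"
  proof
    fix m
    have "\<rho> m m = 0" using R that unfolding Rel_def by blast
    then have "(\<lambda>j. \<theta> j m * cnj (\<theta> j m)) sums 0" using decomp_sums[OF dec, of m m] by simp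
    then show "\<theta> i m = 0" by (rule sums_sq_zero)
  qed
  show ?thesis unfolding Pset_def using decomp_ell2[OF dec] lin z by blast
qed

definition mrg :: "'v set \<Rightarrow> ('v \<Rightarrow> 'a) \<Rightarrow> ('v \<Rightarrow> 'a) \<Rightarrow> ('v \<Rightarrow> 'a)" where
  "mrg W' n m = (\<lambda>v. if v \<in> W' then n v else m v)"

lemma ptrace_eq: "ptrace ty zr X W' \<rho> m p = (if m \<in> assigns ty zr X \<and> p \<in> assigns ty zr X then
      infsum (\<lambda>n. \<rho> (mrg W' n m) (mrg W' n p)) (assigns ty zr W') else 0)"
  unfolding ptrace_def mrg_def by simp

lemma Rel_ptrace:
  assumes R: "Rel ty zr V Y \<psi> \<rho>0" and V: "V = X \<union> W'" and disj: "X \<inter> W' = {}" and Y: "Y \<subseteq> X"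
  shows "Rel ty zr X Y \<psi> (ptrace ty zr X W' \<rho>0)"
proof -
  have lin: "ptrace ty zr X W' \<rho>0 m p * \<psi> (restr zr Y m') = ptrace ty zr X W' \<rho>0 m' p * \<psi> (restr zr Y m)"
    if ag: "agree ty zr X Y m m'" for m m' p
  proof (cases "p \<in> assigns ty zr X")
    case False then show ?thesis by (simp add: ptrace_eq)
  next
    case True
    have ma: "m \<in> assigns ty zr X" "m' \<in> assigns ty zr X" using ag unfolding agree_def by auto
    have ag2: "agree ty zr V Y (mrg W' n m) (mrg W' n m')" if n: "n \<in> assigns ty zr W'" for n
    proof -
      have "mrg W' n q \<in> assigns ty zr V" if "q \<in> assigns ty zr X" for q
        using n that V unfolding assigns_def mrg_def by auto
      then show ?thesis using ma ag unfolding agree_def mrg_def by auto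
    qed
    have ry: "restr zr Y (mrg W' n q) = restr zr Y q" for n q
      using disj Y unfolding restr_def mrg_def by (auto simp: fun_eq_iff)
    have "ptrace ty zr X W' \<rho>0 m p * \<psi> (restr zr Y m') =
        infsum (\<lambda>n. \<rho>0 (mrg W' n m) (mrg W' n p) * \<psi> (restr zr Y m')) (assigns ty zr W')"
      using ma True by (simp add: ptrace_eq infsum_cmult_left')
    also have "\<dots> = infsum (\<lambda>n. \<rho>0 (mrg W' n m') (mrg W' n p) * \<psi> (restr zr Y m)) (assigns ty zr W')"
    proof (rule infsum_cong)
      fix n assume n: "n \<in> assigns ty zr W'"
      have "\<rho>0 (mrg W' n m) (mrg W' n p) * \<psi> (restr zr Y (mrg W' n m')) =
            \<rho>0 (mrg W' n m') (mrg W' n p) * \<psi> (restr zr Y (mrg W' n m))"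
        using R ag2[OF n] unfolding Rel_def by blast
      then show "\<rho>0 (mrg W' n m) (mrg W' n p) * \<psi> (restr zr Y m') =
            \<rho>0 (mrg W' n m') (mrg W' n p) * \<psi> (restr zr Y m)" by (simp only: ry)
    qed
    also have "\<dots> = ptrace ty zr X W' \<rho>0 m' p * \<psi> (restr zr Y m)"
      using ma True by (simp add: ptrace_eq infsum_cmult_left')
    finally show ?thesis .
  qed
  have z: "ptrace ty zr X W' \<rho>0 m p = 0" if "\<psi> = (\<lambda>_. 0)" for m p
    using R that unfolding Rel_def by (simp add: ptrace_eq)
  show ?thesis unfolding Rel_def using lin z by blast
qed

lemma assigns_mono:
  assumes "X \<subseteq> W" "\<forall>v. zr v \<in> ty v"
  shows "assigns ty zr X \<subseteq> assigns ty zr W"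
  using assms unfolding assigns_def by auto

lemma ell2_mono:
  assumes "X \<subseteq> W" "\<forall>v. zr v \<in> ty v"
  shows "ell2 ty zr X \<subseteq> ell2 ty zr W"
  using assigns_mono[OF assms] unfolding ell2_def by blast

lemma decomp_mono:
  assumes "decomp ty zr X \<rho> \<theta>" "X \<subseteq> W" "\<forall>v. zr v \<in> ty v"
  shows "decomp ty zr W \<rho> \<theta>"
  using assms ell2_mono[OF assms(2,3)] unfolding decomp_def by blast

lemma ptrace_supported:
  assumes supp: "\<And>m p. \<rho> m p \<noteq> 0 \<Longrightarrow> m \<in> assigns ty zr X \<and> p \<in> assigns ty zr X"
    and disj: "X \<inter> W' = {}" and types: "\<forall>v. zr v \<in> ty v"
  shows "ptrace ty zr X W' \<rho> = \<rho>"
proof (intro ext)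
  fix m p
  show "ptrace ty zr X W' \<rho> m p = \<rho> m p"
  proof (cases "m \<in> assigns ty zr X \<and> p \<in> assigns ty zr X")
    case False then show ?thesis using supp by (auto simp: ptrace_eq)
  next
    case True
    have zra: "zr \<in> assigns ty zr W'" using types unfolding assigns_def by auto
    have mz: "mrg W' zr q = q" if "q \<in> assigns ty zr X" for q
      using that disj unfolding mrg_def assigns_def by (auto simp: fun_eq_iff)
    have nz: "\<rho> (mrg W' n m) (mrg W' n p) = 0" if "n \<in> assigns ty zr W' - {zr}" for n
    proof -
      have "n \<noteq> zr" using that by blast
      then obtain v where v: "n v \<noteq> zr v" by (meson ext)
      then have "v \<in> W'" using that unfolding assigns_def by auto
      then have "mrg W' n m \<notin> assigns ty zr X" using v disj unfolding mrg_def assigns_def by auto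
      then show ?thesis using supp by blast
    qed
    have "infsum (\<lambda>n. \<rho> (mrg W' n m) (mrg W' n p)) (assigns ty zr W')
        = infsum (\<lambda>n. \<rho> (mrg W' n m) (mrg W' n p)) {zr}"
      by (rule infsum_cong_neutral) (use nz zra in auto)
    also have "\<dots> = \<rho> m p" using mz True by simp
    finally show ?thesis using True by (simp add: ptrace_eq)
  qed
qed

lemma decomp_zero: "decomp ty zr W (\<lambda>_ _. 0) (\<lambda>_ _. 0)"
  unfolding decomp_def by (simp add: ell2_zero)

lemma proj0_decomp:
  assumes types: "\<forall>v. zr v \<in> ty v"
  shows "decomp ty zr U (proj0 zr) (\<lambda>i m. if i = 0 \<and> m = zr then 1 else 0)"
proof -
  have zra: "zr \<in> assigns ty zr U" using types unfolding assigns_def by auto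
  have e0: "(\<lambda>m. if i = 0 \<and> m = zr then 1 else 0) \<in> ell2 ty zr U" for i
  proof -
    let ?f = "\<lambda>m. (cmod (if i = 0 \<and> m = zr then 1 else 0 :: complex))\<^sup>2"
    have "?f summable_on {zr}" by simp
    then have "?f summable_on UNIV"
      by (rule summable_on_cong_neutral[where S="{zr}" and f="?f", THEN iffD1, rotated -1]) auto
    moreover have "\<forall>m. (if i = 0 \<and> m = zr then 1 else 0 :: complex) \<noteq> 0 \<longrightarrow> m \<in> assigns ty zr U"
      using zra by simp
    ultimately show ?thesis unfolding ell2_def by blast
  qed
  have s: "summable (\<lambda>i. (l2norm (\<lambda>m. if i = 0 \<and> m = zr then 1 else 0 :: complex))\<^sup>2)"
  proof -
    have eq: "(\<lambda>i. (l2norm (\<lambda>m. if i = 0 \<and> m = zr then 1 else 0 :: complex))\<^sup>2) =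
        (\<lambda>i. if i = 0 then (l2norm (\<lambda>m. if m = zr then 1 else 0 :: complex))\<^sup>2 else 0)"
      by (intro ext) (simp add: l2norm_def)
    show ?thesis unfolding eq
      by (rule sums_summable[OF sums_single[of 0 "\<lambda>_. (l2norm (\<lambda>m. if m = zr then 1 else 0 :: complex))\<^sup>2"]])
  qed
  have sm: "(\<lambda>i. (if i = 0 \<and> m = zr then 1 else 0) * cnj (if i = 0 \<and> p = zr then 1 else 0)) sums proj0 zr m p" for m p
  proof -
    have eq: "(\<lambda>i. (if i = 0 \<and> m = zr then 1 else 0) * cnj (if i = 0 \<and> p = zr then 1 else 0 :: complex)) =
      (\<lambda>i. if i = 0 then proj0 zr m p else 0)"
      by (intro ext) (simp add: proj0_def)
    show ?thesis unfolding eq by (rule sums_single[of 0 "\<lambda>_. proj0 zr m p"])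
  qed
  show ?thesis unfolding decomp_def using e0 s sm by blast
qed

lemma tensor_op_zero: "tensor_op ty zr A B (\<lambda>_ _. 0) (\<lambda>_ _. 0) = (\<lambda>_ _. 0)"
  unfolding tensor_op_def by (intro ext) simp

lemma separable_triv:
  assumes mix: "is_mixed ty zr A \<rho>"
    and supp: "\<And>m p. \<rho> m p \<noteq> 0 \<Longrightarrow> m \<in> assigns ty zr A \<and> p \<in> assigns ty zr A"
    and disj: "A \<inter> U = {}" and types: "\<forall>v. zr v \<in> ty v"
  shows "separable ty zr A U \<rho>"
proof -
  define r1 where "r1 i = (if i = (0::nat) then \<rho> else (\<lambda>_ _. 0))" for i
  define r2 where "r2 i = (if i = (0::nat) then proj0 zr else (\<lambda>_ _. 0))" for i
  have m1: "is_mixed ty zr A (r1 i)" for i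
    using mix decomp_zero[of ty zr A] unfolding r1_def is_mixed_def by (cases "i = 0") auto
  have m2: "is_mixed ty zr U (r2 i)" for i
    using proj0_decomp[OF types, of U] decomp_zero[of ty zr U] unfolding r2_def is_mixed_def by (cases "i = 0") auto
  have t0: "tensor_op ty zr A U \<rho> (proj0 zr) m p = \<rho> m p" for m p
  proof (cases "m \<in> assigns ty zr (A \<union> U) \<and> p \<in> assigns ty zr (A \<union> U)")
    case False
    then have "\<rho> m p = 0" using supp assigns_mono[of A "A \<union> U" zr ty] types by blast
    then show ?thesis using False unfolding tensor_op_def by auto
  next
    case True
    show ?thesis
    proof (cases "restr zr U m = zr \<and> restr zr U p = zr")
      case True2: True
      have "restr zr A q = q" if "q \<in> assigns ty zr (A \<union> U)" "restr zr U q = zr" for q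
      proof
        fix v show "restr zr A q v = q v"
        proof (cases "v \<in> U")
          case True then have "q v = zr v" using fun_cong[OF that(2), of v] unfolding restr_def by simp
          then show ?thesis unfolding restr_def by simp
        next
          case False then show ?thesis using that(1) unfolding restr_def assigns_def by auto
        qed
      qed
      then show ?thesis using True True2 unfolding tensor_op_def proj0_def by simp
    next
      case False
      then obtain q where q: "q = m \<or> q = p" "restr zr U q \<noteq> zr" by blast
      then obtain v where "v \<in> U" "q v \<noteq> zr v" unfolding restr_def by (auto simp: fun_eq_iff split: if_splits)
      then have "q \<notin> assigns ty zr A" using disj unfolding assigns_def by auto
      then have "\<rho> m p = 0" using supp q(1) by blast
      then show ?thesis using False unfolding tensor_op_def proj0_def by auto
    qed
  qed
  have sm: "(\<lambda>i. tensor_op ty zr A U (r1 i) (r2 i) m p) sums \<rho> m p" for m p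
  proof -
    have "(\<lambda>i. tensor_op ty zr A U (r1 i) (r2 i) m p) = (\<lambda>i. if i = 0 then \<rho> m p else 0)"
      by (intro ext) (simp add: r1_def r2_def t0 tensor_op_zero)
    then show ?thesis using sums_single[of 0 "\<lambda>_. \<rho> m p"] by simp
  qed
  show ?thesis unfolding separable_def using m1 m2 sm by blast
qed

lemma decomp_abs_summable:
  assumes dec: "decomp ty zr W \<rho> \<theta>"
  shows "summable (\<lambda>i. cmod (\<theta> i m * cnj (\<theta> i p)))"
proof -
  have sl: "summable (\<lambda>i. (l2norm (\<theta> i))\<^sup>2)" using dec unfolding decomp_def by blast
  have sq: "summable (\<lambda>i. (cmod (\<theta> i q))\<^sup>2)" for q
  proof (rule summable_comparison_test'[OF sl])
    fix i :: nat
    have "cmod (\<theta> i q) \<le> l2norm (\<theta> i)"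
      by (rule pointwise_le_l2norm[OF ell2_sq_summable[OF decomp_ell2[OF dec]]])
    then show "norm ((cmod (\<theta> i q))\<^sup>2) \<le> (l2norm (\<theta> i))\<^sup>2" by (simp add: power_mono)
  qed
  show ?thesis
  proof (rule summable_comparison_test'[OF summable_add[OF sq[of m] sq[of p]]])
    fix i :: nat
    have "2 * cmod (\<theta> i m) * cmod (\<theta> i p) \<le> (cmod (\<theta> i m))\<^sup>2 + (cmod (\<theta> i p))\<^sup>2"
      by (rule sum_squares_bound)
    moreover have "0 \<le> cmod (\<theta> i m) * cmod (\<theta> i p)" by simp
    moreover have "norm (cmod (\<theta> i m * cnj (\<theta> i p))) = cmod (\<theta> i m) * cmod (\<theta> i p)"
      by (simp add: norm_mult)
    ultimately show "norm (cmod (\<theta> i m * cnj (\<theta> i p))) \<le> (cmod (\<theta> i m))\<^sup>2 + (cmod (\<theta> i p))\<^sup>2"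
      by linarith
  qed
qed

lemma interleave_has_sum:
  fixes f :: "nat \<Rightarrow> 'b::banach"
  assumes N: "N > 0"
    and sm: "\<And>t. t < N \<Longrightarrow> summable (\<lambda>i. norm (f (i * N + t)))"
    and su: "\<And>t. t < N \<Longrightarrow> (\<lambda>i. f (i * N + t)) sums s t"
  shows "(f has_sum (\<Sum>t<N. s t)) UNIV"
proof -
  define R where "R t = range (\<lambda>i. i * N + t)" for t
  have ht: "(f has_sum s t) (R t)" if "t < N" for t
  proof -
    have "((\<lambda>i. f (i * N + t)) has_sum s t) UNIV"
      by (rule norm_summable_imp_has_sum[OF sm[OF that] su[OF that]])
    moreover have "inj (\<lambda>i. i * N + t)" using N by (intro injI) simp
    ultimately show ?thesis unfolding R_def using has_sum_reindex[of "\<lambda>i. i * N + t" UNIV f]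
      by (simp add: o_def)
  qed
  have ind: "n \<le> N \<Longrightarrow> (f has_sum (\<Sum>t<n. s t)) (\<Union>t<n. R t)" for n
  proof (induction n)
    case 0 then show ?case by simp
  next
    case (Suc n)
    have disj: "R n \<inter> (\<Union>t<n. R t) = {}"
    proof -
      have "j mod N = n" if "j \<in> R n" for j using that Suc.prems unfolding R_def by auto
      moreover have "j mod N < n" if "j \<in> (\<Union>t<n. R t)" for j using that Suc.prems unfolding R_def by auto
      ultimately show ?thesis by fastforce
    qed
    have "(f has_sum (s n + (\<Sum>t<n. s t))) (R n \<union> (\<Union>t<n. R t))"
    proof (rule has_sum_Un_disjoint[OF _ _ disj])
      show "(f has_sum s n) (R n)" using ht Suc.prems by simp
      show "(f has_sum (\<Sum>t<n. s t)) (\<Union>t<n. R t)" using Suc by simp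
    qed
    moreover have "R n \<union> (\<Union>t<n. R t) = (\<Union>t<Suc n. R t)" by (auto simp: lessThan_Suc)
    ultimately show ?case by (simp add: add.commute)
  qed
  have "(\<Union>t<N. R t) = UNIV"
  proof -
    have "j \<in> R (j mod N)" for j unfolding R_def
      by (rule image_eqI[of _ _ "j div N"]) simp_all
    then show ?thesis using N by (auto intro: mod_less_divisor)
  qed
  then show ?thesis using ind[of N] by simp
qed

lemma interleave:
  fixes f :: "nat \<Rightarrow> 'b::banach"
  assumes N: "N > 0"
    and sm: "\<And>t. t < N \<Longrightarrow> summable (\<lambda>i. norm (f (i * N + t)))"
    and su: "\<And>t. t < N \<Longrightarrow> (\<lambda>i. f (i * N + t)) sums s t"
  shows "f sums (\<Sum>t<N. s t)" "summable (\<lambda>j. norm (f j))"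
proof -
  show "f sums (\<Sum>t<N. s t)" by (rule has_sum_imp_sums[OF interleave_has_sum[OF N sm su]])
  have "((\<lambda>j. norm (f j)) has_sum (\<Sum>t<N. suminf (\<lambda>i. norm (f (i * N + t))))) UNIV"
    by (rule interleave_has_sum[OF N]) (use sm in \<open>auto intro: summable_sums\<close>)
  then show "summable (\<lambda>j. norm (f j))" using has_sum_imp_sums sums_summable by blast
qed

lemma decomp_combine:
  fixes g :: "nat \<Rightarrow> 'T::finite"
  assumes N: "N > 0" and g: "bij_betw g {..<N} UNIV"
    and dec: "\<And>t. decomp ty zr W (r t) (\<theta> t)"
  shows "decomp ty zr W (\<lambda>m p. \<Sum>t\<in>UNIV. r t m p) (\<lambda>j. \<theta> (g (j mod N)) (j div N))"
proof -
  have md: "(i * N + t) mod N = t" "(i * N + t) div N = i" if "t < N" for i t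
    using that N by auto
  have e: "\<theta> (g (j mod N)) (j div N) \<in> ell2 ty zr W" for j using decomp_ell2[OF dec] .
  have s: "summable (\<lambda>j. (l2norm (\<theta> (g (j mod N)) (j div N)))\<^sup>2)"
  proof -
    have "summable (\<lambda>j. norm ((l2norm (\<theta> (g (j mod N)) (j div N)))\<^sup>2))"
    proof (rule interleave(2)[OF N])
      fix t assume t: "t < N"
      have "summable (\<lambda>i. (l2norm (\<theta> (g t) i))\<^sup>2)" using dec unfolding decomp_def by blast
      then show "summable (\<lambda>i. norm ((l2norm (\<theta> (g ((i * N + t) mod N)) ((i * N + t) div N)))\<^sup>2))"
        using md[OF t] by simp
      show "(\<lambda>i. (l2norm (\<theta> (g ((i * N + t) mod N)) ((i * N + t) div N)))\<^sup>2) sums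
             suminf (\<lambda>i. (l2norm (\<theta> (g t) i))\<^sup>2)"
        using md[OF t] summable_sums[OF \<open>summable (\<lambda>i. (l2norm (\<theta> (g t) i))\<^sup>2)\<close>] by simp
    qed
    then show ?thesis by simp
  qed
  have sm: "(\<lambda>j. \<theta> (g (j mod N)) (j div N) m * cnj (\<theta> (g (j mod N)) (j div N) p)) sums (\<Sum>t\<in>UNIV. r t m p)" for m p
  proof -
    have "(\<lambda>j. \<theta> (g (j mod N)) (j div N) m * cnj (\<theta> (g (j mod N)) (j div N) p)) sums (\<Sum>t<N. r (g t) m p)"
    proof (rule interleave(1)[OF N])
      fix t assume t: "t < N"
      show "summable (\<lambda>i. norm (\<theta> (g ((i * N + t) mod N)) ((i * N + t) div N) m *
                cnj (\<theta> (g ((i * N + t) mod N)) ((i * N + t) div N) p)))"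
        using md[OF t] decomp_abs_summable[OF dec[of "g t"], of m p] by simp
      show "(\<lambda>i. \<theta> (g ((i * N + t) mod N)) ((i * N + t) div N) m *
                cnj (\<theta> (g ((i * N + t) mod N)) ((i * N + t) div N) p)) sums r (g t) m p"
        using md[OF t] decomp_sums[OF dec[of "g t"], of m p] by simp
    qed
    moreover have "(\<Sum>t<N. r (g t) m p) = (\<Sum>t\<in>UNIV. r t m p)"
      using sum.reindex_bij_betw[OF g, of "\<lambda>t. r t m p"] by simp
    ultimately show ?thesis by simp
  qed
  show ?thesis unfolding decomp_def using e s sm by blast
qed

lemma sem_apply_single:
  assumes C1: "\<And>m n n'. lift_op ty zr Xall X K m n \<noteq> 0 \<Longrightarrow> \<rho> n n' \<noteq> 0 \<Longrightarrow> n = f m"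
      and C2: "\<And>m n n'. lift_op ty zr Xall X K m n' \<noteq> 0 \<Longrightarrow> \<rho> n n' \<noteq> 0 \<Longrightarrow> n' = f m"
  shows "sem ty zr Xall (Apply K X) \<rho> m p =
     lift_op ty zr Xall X K m (f m) * (\<rho> (f m) (f p) * cnj (lift_op ty zr Xall X K p (f p)))"
proof -
  let ?L = "lift_op ty zr Xall X K"
  have inner: "infsum (\<lambda>n'. \<rho> n n' * cnj (?L p n')) UNIV = \<rho> n (f p) * cnj (?L p (f p))" for n
  proof -
    have "infsum (\<lambda>n'. \<rho> n n' * cnj (?L p n')) UNIV = infsum (\<lambda>n'. \<rho> n n' * cnj (?L p n')) {f p}"
    proof (rule infsum_cong_neutral)
      fix n' assume "n' \<in> UNIV - {f p}"
      then have "n' \<noteq> f p" by simp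
      then show "\<rho> n n' * cnj (?L p n') = 0" using C2[of p n' n] by auto
    qed auto
    then show ?thesis by simp
  qed
  have "infsum (\<lambda>n. ?L m n * (\<rho> n (f p) * cnj (?L p (f p)))) UNIV =
      infsum (\<lambda>n. ?L m n * (\<rho> n (f p) * cnj (?L p (f p)))) {f m}"
  proof (rule infsum_cong_neutral)
    fix n assume "n \<in> UNIV - {f m}"
    then have "n \<noteq> f m" by simp
    then show "?L m n * (\<rho> n (f p) * cnj (?L p (f p))) = 0" using C1[of m n "f p"] by auto
  qed auto
  then show ?thesis by (simp add: inner Let_def)
qed

lemma lift_op_nz:
  assumes "lift_op ty zr Xall X K m n \<noteq> 0"
  shows "m \<in> assigns ty zr Xall" "n \<in> assigns ty zr Xall" "\<And>v. v \<notin> X \<Longrightarrow> m v = n v"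
    "K (restr zr X m) (restr zr X n) \<noteq> 0"
  using assms unfolding lift_op_def by (auto split: if_splits)

lemma restr_single: "restr zr {v} m = zr \<longleftrightarrow> m v = zr v"
proof
  assume a: "restr zr {v} m = zr"
  have "restr zr {v} m v = zr v" using a by simp
  then show "m v = zr v" unfolding restr_def by simp
next
  assume a: "m v = zr v"
  show "restr zr {v} m = zr"
  proof
    fix u show "restr zr {v} m u = zr u" using a unfolding restr_def by (cases "u = v") simp_all
  qed
qed

lemma upd_in_assigns:
  assumes "m \<in> assigns ty zr Xall" "v \<in> Xall" "a \<in> ty v"
  shows "m(v := a) \<in> assigns ty zr Xall"
  using assms unfolding assigns_def by auto

lemma sem_apply_var_zero:
  assumes supp0: "\<forall>n n'. \<rho> n n' \<noteq> 0 \<longrightarrow> n v = zr v \<and> n' v = zr v"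
    and v: "v \<in> Xall" and types: "\<forall>u. zr u \<in> ty u"
  shows "sem ty zr Xall (Apply K {v}) \<rho> m p =
     (if m \<in> assigns ty zr Xall then K (restr zr {v} m) zr else 0) *
       (\<rho> (m(v := zr v)) (p(v := zr v)) *
        cnj (if p \<in> assigns ty zr Xall then K (restr zr {v} p) zr else 0))"
proof -
  let ?L = "lift_op ty zr Xall {v} K"
  have supp: "\<rho> n n' \<noteq> 0 \<Longrightarrow> n v = zr v \<and> n' v = zr v" for n n' using supp0 by blast
  have eqf: "n = m(v := zr v)" if "?L m n \<noteq> 0" "n v = zr v" for m n
  proof
    fix u show "n u = (m(v := zr v)) u"
      using lift_op_nz(3)[OF that(1), of u] that(2) by (cases "u = v") auto
  qed
  have Lval: "?L q (q(v := zr v)) = (if q \<in> assigns ty zr Xall then K (restr zr {v} q) zr else 0)" for q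
  proof (cases "q \<in> assigns ty zr Xall")
    case True
    have "q(v := zr v) \<in> assigns ty zr Xall" by (rule upd_in_assigns[OF True v]) (use types in auto)
    moreover have "restr zr {v} (q(v := zr v)) = zr" by (simp add: restr_single)
    ultimately show ?thesis using True unfolding lift_op_def by simp
  next
    case False then show ?thesis unfolding lift_op_def by simp
  qed
  have "sem ty zr Xall (Apply K {v}) \<rho> m p = ?L m (m(v := zr v)) * (\<rho> (m(v := zr v)) (p(v := zr v)) * cnj (?L p (p(v := zr v))))"
  proof (rule sem_apply_single)
    show "n = m(v := zr v)" if "?L m n \<noteq> 0" "\<rho> n n' \<noteq> 0" for m n n'
      using eqf[OF that(1)] supp[OF that(2)] by blast
    show "n' = m(v := zr v)" if "?L m n' \<noteq> 0" "\<rho> n n' \<noteq> 0" for m n n'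
      using eqf[OF that(1)] supp[OF that(2)] by blast
  qed
  then show ?thesis by (simp only: Lval)
qed

lemma assigns_single:
  assumes bij: "bij_betw ev UNIV (ty v)"
  shows "assigns ty zr {v} = range (\<lambda>k. zr(v := ev k))"
proof
  show "assigns ty zr {v} \<subseteq> range (\<lambda>k. zr(v := ev k))"
  proof
    fix n assume n: "n \<in> assigns ty zr {v}"
    then have "n v \<in> ty v" unfolding assigns_def by auto
    moreover have "ev ` UNIV = ty v" using bij_betw_imp_surj_on[OF bij] .
    ultimately obtain k where k: "n v = ev k" by (metis imageE)
    have "n = zr(v := ev k)"
    proof
      fix u show "n u = (zr(v := ev k)) u"
      proof (cases "u = v")
        case True then show ?thesis using k by simp
      next
        case False then show ?thesis using n unfolding assigns_def by simp
      qed
    qed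
    then show "n \<in> range (\<lambda>k. zr(v := ev k))" by blast
  qed
  show "range (\<lambda>k. zr(v := ev k)) \<subseteq> assigns ty zr {v}"
  proof
    fix n assume "n \<in> range (\<lambda>k. zr(v := ev k))"
    then obtain k where k: "n = zr(v := ev k)" by blast
    have "ev k \<in> ty v" using bij unfolding bij_betw_def by blast
    then show "n \<in> assigns ty zr {v}" unfolding assigns_def k by simp
  qed
qed

lemma sem_init:
  fixes ev :: "'b::finite \<Rightarrow> 'a"
  assumes v: "v \<in> Xall" and bij: "bij_betw ev UNIV (ty v)" and types: "\<forall>u. zr u \<in> ty u"
  shows "sem ty zr Xall (Init v) \<rho> = (\<lambda>m p. if m \<in> assigns ty zr Xall \<and> p \<in> assigns ty zr Xall \<and>
      m v = zr v \<and> p v = zr v then \<Sum>k\<in>UNIV. \<rho> (m(v := ev k)) (p(v := ev k)) else 0)"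
proof (intro ext)
  fix m p
  let ?A = "assigns ty zr Xall"
  have XU: "(Xall - {v}) \<union> {v} = Xall" using v by blast
  have inj: "inj (\<lambda>k. zr(v := ev k))"
  proof
    fix k k' assume "zr(v := ev k) = zr(v := ev k')"
    then have "(zr(v := ev k)) v = (zr(v := ev k')) v" by simp
    then have "ev k = ev k'" by simp
    then show "k = k'" using bij unfolding bij_betw_def inj_def by blast
  qed
  have pt: "ptrace ty zr (Xall - {v}) {v} \<rho> (restr zr (Xall - {v}) m) (restr zr (Xall - {v}) p) =
      (\<Sum>k\<in>UNIV. \<rho> (m(v := ev k)) (p(v := ev k)))" if mp: "m \<in> ?A" "p \<in> ?A"
  proof -
    have ra: "restr zr (Xall - {v}) q \<in> assigns ty zr (Xall - {v})" if "q \<in> ?A" for q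
      by (rule restr_in_assigns[OF that]) auto
    have mg: "mrg {v} (zr(v := ev k)) (restr zr (Xall - {v}) q) = q(v := ev k)" if "q \<in> ?A" for q k
    proof
      fix u show "mrg {v} (zr(v := ev k)) (restr zr (Xall - {v}) q) u = (q(v := ev k)) u"
        using that unfolding mrg_def restr_def assigns_def by auto
    qed
    have "ptrace ty zr (Xall - {v}) {v} \<rho> (restr zr (Xall - {v}) m) (restr zr (Xall - {v}) p) =
       infsum (\<lambda>n. \<rho> (mrg {v} n (restr zr (Xall - {v}) m)) (mrg {v} n (restr zr (Xall - {v}) p))) (range (\<lambda>k. zr(v := ev k)))"
      using ra[OF mp(1)] ra[OF mp(2)] by (simp add: ptrace_eq assigns_single[where ty=ty and v=v and ev=ev and zr=zr, OF bij])
    also have "\<dots> = infsum ((\<lambda>n. \<rho> (mrg {v} n (restr zr (Xall - {v}) m)) (mrg {v} n (restr zr (Xall - {v}) p))) \<circ> (\<lambda>k. zr(v := ev k))) UNIV"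
      by (rule infsum_reindex[OF inj])
    also have "\<dots> = infsum (\<lambda>k. \<rho> (m(v := ev k)) (p(v := ev k))) UNIV"
      unfolding o_def mg[OF mp(1)] mg[OF mp(2)] ..
    also have "\<dots> = (\<Sum>k\<in>UNIV. \<rho> (m(v := ev k)) (p(v := ev k)))" by simp
    finally show ?thesis .
  qed
  have pj: "proj0 zr (restr zr {v} m) (restr zr {v} p) = (if m v = zr v \<and> p v = zr v then 1 else 0)"
    unfolding proj0_def by (simp add: restr_single)
  show "sem ty zr Xall (Init v) \<rho> m p = (if m \<in> ?A \<and> p \<in> ?A \<and> m v = zr v \<and> p v = zr v
      then \<Sum>k\<in>UNIV. \<rho> (m(v := ev k)) (p(v := ev k)) else 0)"
  proof (cases "m \<in> ?A \<and> p \<in> ?A")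
    case True
    then show ?thesis unfolding sem.simps tensor_op_def XU pt[OF conjunct1[OF True] conjunct2[OF True]] pj
      by simp
  next
    case False
    then show ?thesis unfolding sem.simps tensor_op_def XU by auto
  qed
qed

definition pm :: "bool \<times> bool \<Rightarrow> bool \<Rightarrow> bool" where
  "pm k b = (if snd k then \<not> b else b)"

lemma encM_nz0: "encM (k1, k2) b b' \<noteq> 0 \<Longrightarrow> b' = pm (k1, k2) b"
  by (cases k1; cases k2; cases b; cases b') (simp_all add: encM_def mmul_def mpow_def Xm_def Zm_def pm_def UNIV_bool)

lemma decM_nz0: "decM (k1, k2) b b' \<noteq> 0 \<Longrightarrow> b' = pm (k1, k2) b"
  by (cases k1; cases k2; cases b; cases b') (simp_all add: decM_def mmul_def mpow_def Xm_def Zm_def pm_def UNIV_bool)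

lemma encM_nz: "encM k b b' \<noteq> 0 \<Longrightarrow> b' = pm k b"
  using encM_nz0 by (cases k) blast

lemma decM_nz: "decM k b b' \<noteq> 0 \<Longrightarrow> b' = pm k b"
  using decM_nz0 by (cases k) blast

lemma pm_pm[simp]: "pm k (pm k b) = b" by (simp add: pm_def)

lemma dec_enc_one0: "decM (k1, k2) b (pm (k1, k2) b) * encM (k1, k2) (pm (k1, k2) b) b = 1"
  by (cases k1; cases k2; cases b) (simp_all add: encM_def decM_def mmul_def mpow_def Xm_def Zm_def pm_def UNIV_bool)

lemma dec_enc_one: "decM k b (pm k b) * encM k (pm k b) b = 1"
  using dec_enc_one0 by (cases k) blast

lemma restr_xy:
  assumes "x \<noteq> y"
  shows "restr zr {x, y} q = zr(x := a, y := c) \<longleftrightarrow> q x = a \<and> q y = c"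
proof
  assume h: "restr zr {x, y} q = zr(x := a, y := c)"
  have "restr zr {x, y} q x = (zr(x := a, y := c)) x" "restr zr {x, y} q y = (zr(x := a, y := c)) y"
    using h by simp_all
  then show "q x = a \<and> q y = c" using assms unfolding restr_def by simp
next
  assume h: "q x = a \<and> q y = c"
  show "restr zr {x, y} q = zr(x := a, y := c)"
  proof
    fix u show "restr zr {x, y} q u = (zr(x := a, y := c)) u"
      using h assms unfolding restr_def by (cases "u = x"; cases "u = y") simp_all
  qed
qed

lemma ctrl_val:
  assumes xy: "x \<noteq> y" and injx: "inj ex" and injy: "inj ey"
    and m: "m \<in> assigns ty zr Xall" "m(y := ey b') \<in> assigns ty zr Xall"
    and mx: "m x = ex k" and my: "m y = ey b"
  shows "lift_op ty zr Xall {x, y} (ctrlK zr x y ex ey M) m (m(y := ey b')) = M k b b'"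
proof -
  have c: "(restr zr {x, y} m = zr(x := ex k', y := ey b1) \<and> restr zr {x, y} (m(y := ey b')) = zr(x := ex k', y := ey b2))
     \<longleftrightarrow> (k', b1, b2) = (k, b, b')" for k' b1 b2
  proof -
    have i1: "ex a = ex a' \<longleftrightarrow> a = a'" for a a' by (rule inj_eq[OF injx])
    have i2: "ey a = ey a' \<longleftrightarrow> a = a'" for a a' by (rule inj_eq[OF injy])
    show ?thesis unfolding restr_xy[OF xy] using xy mx my i1 i2 by auto
  qed
  have "ctrlK zr x y ex ey M (restr zr {x, y} m) (restr zr {x, y} (m(y := ey b'))) =
      (\<Sum>t\<in>UNIV. if t = (k, b, b') then M k b b' else 0)"
    unfolding ctrlK_def
  proof (intro sum.cong refl)
    fix t :: "(bool \<times> bool) \<times> bool \<times> bool"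
    obtain k' b1 b2 where t: "t = (k', b1, b2)" by (cases t) auto
    show "(case t of (k', b1, b2) \<Rightarrow> if restr zr {x, y} m = zr(x := ex k', y := ey b1) \<and>
       restr zr {x, y} (m(y := ey b')) = zr(x := ex k', y := ey b2) then M k' b1 b2 else 0) =
       (if t = (k, b, b') then M k b b' else 0)"
    proof (cases "(k', b1, b2) = (k, b, b')")
      case True
      then have e: "k' = k" "b1 = b" "b2 = b'" by simp_all
      show ?thesis unfolding t using c[of k' b1 b2] True unfolding e by simp
    next
      case False
      have nc: "\<not> (restr zr {x, y} m = zr(x := ex k', y := ey b1) \<and>
         restr zr {x, y} (m(y := ey b')) = zr(x := ex k', y := ey b2))"
        using False c[of k' b1 b2] by blast
      have F2: "t \<noteq> (k, b, b')" using False t by simp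
      show ?thesis by (simp only: t prod.case if_not_P[OF nc] if_not_P[OF F2[unfolded t]])
    qed
  qed
  also have "\<dots> = M k b b'" by simp
  finally show ?thesis using m xy unfolding lift_op_def by simp
qed

lemma ctrl_nz:
  assumes xy: "x \<noteq> y"
    and nz: "lift_op ty zr Xall {x, y} (ctrlK zr x y ex ey M) m n \<noteq> 0"
  shows "\<exists>k b b'. m x = ex k \<and> m y = ey b \<and> n = m(y := ey b') \<and> M k b b' \<noteq> 0"
proof -
  have ag: "\<And>v. v \<notin> {x, y} \<Longrightarrow> m v = n v" using lift_op_nz(3)[OF nz] .
  have "ctrlK zr x y ex ey M (restr zr {x, y} m) (restr zr {x, y} n) \<noteq> 0" using lift_op_nz(4)[OF nz] .
  then obtain t where t: "(case t of (k, b, b') \<Rightarrow> if restr zr {x, y} m = zr(x := ex k, y := ey b) \<and>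
      restr zr {x, y} n = zr(x := ex k, y := ey b') then M k b b' else 0) \<noteq> 0"
    unfolding ctrlK_def by (meson sum.not_neutral_contains_not_neutral)
  obtain k b b' where tt: "t = (k, b, b')" by (cases t) auto
  have h: "restr zr {x, y} m = zr(x := ex k, y := ey b)" "restr zr {x, y} n = zr(x := ex k, y := ey b')"
      "M k b b' \<noteq> 0"
    using t unfolding tt by (auto split: if_splits)
  have mx: "m x = ex k" "m y = ey b" using h(1) unfolding restr_xy[OF xy] by auto
  have nx: "n x = ex k" "n y = ey b'" using h(2) unfolding restr_xy[OF xy] by auto
  have "n = m(y := ey b')"
  proof
    fix u show "n u = (m(y := ey b')) u"
    proof (cases "u = x \<or> u = y")
      case True then show ?thesis using mx nx xy by auto
    next
      case False then show ?thesis using ag[of u] by auto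
    qed
  qed
  then show ?thesis using mx h(3) by blast
qed

definition S2 :: "('v \<Rightarrow> 'a set) \<Rightarrow> ('v \<Rightarrow> 'a) \<Rightarrow> 'v set \<Rightarrow> 'v \<Rightarrow> (bool \<times> bool \<Rightarrow> 'a)
   \<Rightarrow> (('v \<Rightarrow> 'a) \<Rightarrow> ('v \<Rightarrow> 'a) \<Rightarrow> complex) \<Rightarrow> (('v \<Rightarrow> 'a) \<Rightarrow> ('v \<Rightarrow> 'a) \<Rightarrow> complex)" where
  "S2 ty zr Xall x ex \<rho> = (\<lambda>m p. if m \<in> assigns ty zr Xall \<and> p \<in> assigns ty zr Xall then
     (1/4) * (\<Sum>k\<in>UNIV. \<rho> (m(x := ex k)) (p(x := ex k))) else 0)"

definition S3 :: "('v \<Rightarrow> 'a set) \<Rightarrow> ('v \<Rightarrow> 'a) \<Rightarrow> 'v set \<Rightarrow> 'v \<Rightarrow> 'v \<Rightarrow> (bool \<times> bool \<Rightarrow> 'a) \<Rightarrow> (bool \<times> bool \<Rightarrow> 'a)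
   \<Rightarrow> (('v \<Rightarrow> 'a) \<Rightarrow> ('v \<Rightarrow> 'a) \<Rightarrow> complex) \<Rightarrow> (('v \<Rightarrow> 'a) \<Rightarrow> ('v \<Rightarrow> 'a) \<Rightarrow> complex)" where
  "S3 ty zr Xall x w ex ew \<rho> = (\<lambda>m p. if m \<in> assigns ty zr Xall \<and> p \<in> assigns ty zr Xall \<and> m w = zr w \<and> p w = zr w then
     (1/4) * (\<Sum>l\<in>UNIV. \<Sum>k\<in>UNIV. \<rho> (m(x := ex k, w := ew l)) (p(x := ex k, w := ew l))) else 0)"

definition Fst :: "('v \<Rightarrow> 'a set) \<Rightarrow> ('v \<Rightarrow> 'a) \<Rightarrow> 'v set \<Rightarrow> 'v \<Rightarrow> 'v \<Rightarrow> (bool \<times> bool \<Rightarrow> 'a) \<Rightarrow> (bool \<times> bool \<Rightarrow> 'a)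
   \<Rightarrow> (('v \<Rightarrow> 'a) \<Rightarrow> ('v \<Rightarrow> 'a) \<Rightarrow> complex) \<Rightarrow> (('v \<Rightarrow> 'a) \<Rightarrow> ('v \<Rightarrow> 'a) \<Rightarrow> complex)" where
  "Fst ty zr Xall x w ex ew \<rho> = (\<lambda>m p. if m \<in> assigns ty zr Xall \<and> p \<in> assigns ty zr Xall \<and> m w = zr w \<and> p w = zr w \<and> m x = p x then
     (1/4) * (\<Sum>l\<in>UNIV. \<Sum>k\<in>UNIV. \<rho> (m(x := ex k, w := ew l)) (p(x := ex k, w := ew l))) else 0)"

definition cwp :: "'v \<Rightarrow> 'v \<Rightarrow> (bool \<times> bool \<Rightarrow> 'a) \<Rightarrow> (bool \<times> bool \<Rightarrow> 'a) \<Rightarrow> ('v \<Rightarrow> 'a) \<Rightarrow> bool" where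
  "cwp x w ex ew q \<longleftrightarrow> (\<exists>a. q x = ex a \<and> q w = ew a)"

lemma restr_single_eq: "restr zr {v} m = zr(v := m v)"
proof
  fix u show "restr zr {v} m u = (zr(v := m v)) u" unfolding restr_def by (cases "u = v") simp_all
qed

lemma in_range_bij:
  assumes "bij_betw e UNIV (ty v)" "m \<in> assigns ty zr Xall" "v \<in> Xall"
  shows "\<exists>k. m v = e k"
proof -
  have "m v \<in> ty v" using assms(2,3) unfolding assigns_def by auto
  moreover have "e ` UNIV = ty v" using bij_betw_imp_surj_on[OF assms(1)] .
  ultimately show ?thesis by (metis imageE)
qed

lemma bij_in_ty: "bij_betw e UNIV (ty v) \<Longrightarrow> e k \<in> ty v"
  by (erule bij_betw_apply) simp

context
  fixes ty :: "'v \<Rightarrow> 'a set" and zr :: "'v \<Rightarrow> 'a"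
    and Xall :: "'v set" and x y w :: 'v
    and ex ew :: "bool \<times> bool \<Rightarrow> 'a" and ey :: "bool \<Rightarrow> 'a"
    and UK U0 :: "('v \<Rightarrow> 'a) \<Rightarrow> ('v \<Rightarrow> 'a) \<Rightarrow> complex"
  assumes types: "\<forall>v. zr v \<in> ty v"
    and vars: "x \<in> Xall" "y \<in> Xall" "w \<in> Xall"
    and distinct: "x \<noteq> y" "x \<noteq> w" "y \<noteq> w"
    and type_x: "bij_betw ex UNIV (ty x)" "ex (False, False) = zr x"
    and type_y: "bij_betw ey UNIV (ty y)"
    and type_w: "bij_betw ew UNIV (ty w)" "ew (False, False) = zr w"
    and UK: "\<forall>m. UK m zr = (if \<exists>k. m = zr(x := ex k) then 1/2 else 0)"
    and U0: "\<forall>m. U0 m zr = (if m = zr then 1 else 0)"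
begin

lemma injx: "inj ex" using bij_betw_imp_inj_on[OF type_x(1)] .
lemma injw: "inj ew" using bij_betw_imp_inj_on[OF type_w(1)] .
lemma injy: "inj ey" using bij_betw_imp_inj_on[OF type_y(1)] .

lemma upd_x: assumes "m \<in> assigns ty zr Xall" shows "m(x := ex k) \<in> assigns ty zr Xall"
  using upd_in_assigns[where ty=ty and zr=zr and Xall=Xall and v=x and m=m and a="ex k", OF assms vars(1)
    bij_in_ty[where ty=ty and v=x and e=ex, OF type_x(1)]] .
lemma upd_w: assumes "m \<in> assigns ty zr Xall" shows "m(w := ew k) \<in> assigns ty zr Xall"
  using upd_in_assigns[where ty=ty and zr=zr and Xall=Xall and v=w and m=m and a="ew k", OF assms vars(3)
    bij_in_ty[where ty=ty and v=w and e=ew, OF type_w(1)]] .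
lemma upd_y: assumes "m \<in> assigns ty zr Xall" shows "m(y := ey k) \<in> assigns ty zr Xall"
  using upd_in_assigns[where ty=ty and zr=zr and Xall=Xall and v=y and m=m and a="ey k", OF assms vars(2)
    bij_in_ty[where ty=ty and v=y and e=ey, OF type_y(1)]] .
lemma upd_zw: assumes "m \<in> assigns ty zr Xall" shows "m(w := zr w) \<in> assigns ty zr Xall"
  using upd_in_assigns[where ty=ty and zr=zr and Xall=Xall and v=w and m=m and a="zr w", OF assms vars(3)] types by blast
lemma upd_zx: assumes "m \<in> assigns ty zr Xall" shows "m(x := zr x) \<in> assigns ty zr Xall"
  using upd_in_assigns[where ty=ty and zr=zr and Xall=Xall and v=x and m=m and a="zr x", OF assms vars(1)] types by blast

lemma step12: "sem ty zr Xall (Apply UK {x}) (sem ty zr Xall (Init x) \<rho>) = S2 ty zr Xall x ex \<rho>"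
proof (intro ext)
  fix m p
  let ?A = "assigns ty zr Xall"
  define \<rho>1 where "\<rho>1 = (\<lambda>m p. if m \<in> ?A \<and> p \<in> ?A \<and> m x = zr x \<and> p x = zr x
      then \<Sum>k\<in>UNIV. \<rho> (m(x := ex k)) (p(x := ex k)) else 0)"
  have e1: "sem ty zr Xall (Init x) \<rho> = \<rho>1" unfolding \<rho>1_def by (rule sem_init[OF vars(1) type_x(1) types])
  have supp: "\<forall>n n'. \<rho>1 n n' \<noteq> 0 \<longrightarrow> n x = zr x \<and> n' x = zr x" unfolding \<rho>1_def by (auto split: if_splits)
  have uk: "UK (restr zr {x} q) zr = 1/2" if qA: "q \<in> ?A" for q
  proof -
    obtain k where "q x = ex k" using in_range_bij[OF type_x(1) qA vars(1)] by blast
    then have "restr zr {x} q = zr(x := ex k)" by (simp add: restr_single_eq)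
    then have ex': "\<exists>k. restr zr {x} q = zr(x := ex k)" by blast
    have "UK (restr zr {x} q) zr = (if \<exists>k. restr zr {x} q = zr(x := ex k) then 1/2 else 0)"
      using UK by blast
    then show ?thesis by (simp only: if_P[OF ex'])
  qed
  have r1: "\<rho>1 (m(x := zr x)) (p(x := zr x)) = (\<Sum>k\<in>UNIV. \<rho> (m(x := ex k)) (p(x := ex k)))"
    if "m \<in> ?A" "p \<in> ?A" unfolding \<rho>1_def using upd_zx[OF that(1)] upd_zx[OF that(2)] by simp
  show "sem ty zr Xall (Apply UK {x}) (sem ty zr Xall (Init x) \<rho>) m p = S2 ty zr Xall x ex \<rho> m p"
    unfolding e1 sem_apply_var_zero[where v=x and zr=zr and ty=ty and Xall=Xall and \<rho>=\<rho>1, OF supp vars(1) types]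
    by (cases "m \<in> ?A"; cases "p \<in> ?A") (simp_all add: S2_def uk r1)
qed

lemma step3: "sem ty zr Xall (Init w) (S2 ty zr Xall x ex \<rho>) = S3 ty zr Xall x w ex ew \<rho>"
proof (intro ext)
  fix m p
  let ?A = "assigns ty zr Xall"
  show "sem ty zr Xall (Init w) (S2 ty zr Xall x ex \<rho>) m p = S3 ty zr Xall x w ex ew \<rho> m p"
  proof (cases "m \<in> ?A \<and> p \<in> ?A \<and> m w = zr w \<and> p w = zr w")
    case True
    have "sem ty zr Xall (Init w) (S2 ty zr Xall x ex \<rho>) m p =
        (\<Sum>l\<in>UNIV. S2 ty zr Xall x ex \<rho> (m(w := ew l)) (p(w := ew l)))"
      unfolding sem_init[OF vars(3) type_w(1) types] by (simp only: if_P[OF True])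
    also have "\<dots> = (\<Sum>l\<in>UNIV. (1/4) * (\<Sum>k\<in>UNIV. \<rho> (m(x := ex k, w := ew l)) (p(x := ex k, w := ew l))))"
    proof (rule sum.cong[OF refl])
      fix l
      have "m(w := ew l) \<in> ?A" "p(w := ew l) \<in> ?A" using True upd_w by auto
      moreover have "q(w := ew l, x := ex k) = q(x := ex k, w := ew l)" for q :: "'v \<Rightarrow> 'a" and k
        using distinct(2) by (rule fun_upd_twist[symmetric])
      ultimately show "S2 ty zr Xall x ex \<rho> (m(w := ew l)) (p(w := ew l)) =
          (1/4) * (\<Sum>k\<in>UNIV. \<rho> (m(x := ex k, w := ew l)) (p(x := ex k, w := ew l)))"
        unfolding S2_def by simp
    qed
    also have "\<dots> = (1/4) * (\<Sum>l\<in>UNIV. \<Sum>k\<in>UNIV. \<rho> (m(x := ex k, w := ew l)) (p(x := ex k, w := ew l)))"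
      by (rule sum_distrib_left[symmetric])
    also have "\<dots> = S3 ty zr Xall x w ex ew \<rho> m p" unfolding S3_def by (simp only: if_P[OF True])
    finally show ?thesis .
  next
    case False
    then show ?thesis unfolding sem_init[OF vars(3) type_w(1) types] S3_def by (simp only: if_False)
  qed
qed

lemma U0id:
  assumes supp: "\<And>n n'. \<sigma> n n' \<noteq> 0 \<Longrightarrow> n \<in> assigns ty zr Xall \<and> n' \<in> assigns ty zr Xall \<and> n w = zr w \<and> n' w = zr w"
  shows "sem ty zr Xall (Apply U0 {w}) \<sigma> = \<sigma>"
proof (intro ext)
  fix m p
  let ?A = "assigns ty zr Xall"
  have s2: "\<forall>n n'. \<sigma> n n' \<noteq> 0 \<longrightarrow> n w = zr w \<and> n' w = zr w" using supp by blast
  have u0: "U0 (restr zr {w} q) zr = (if q w = zr w then 1 else 0)" for q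
  proof -
    have "U0 (restr zr {w} q) zr = (if restr zr {w} q = zr then 1 else 0)" using U0 by blast
    then show ?thesis by (simp only: restr_single)
  qed
  have E: "sem ty zr Xall (Apply U0 {w}) \<sigma> m p = (if m \<in> ?A then U0 (restr zr {w} m) zr else 0) *
       (\<sigma> (m(w := zr w)) (p(w := zr w)) * cnj (if p \<in> ?A then U0 (restr zr {w} p) zr else 0))"
    by (rule sem_apply_var_zero[where v=w and zr=zr and ty=ty and Xall=Xall and \<rho>=\<sigma>, OF s2 vars(3) types])
  show "sem ty zr Xall (Apply U0 {w}) \<sigma> m p = \<sigma> m p"
  proof (cases "m \<in> ?A \<and> p \<in> ?A \<and> m w = zr w \<and> p w = zr w")
    case True
    then have "m(w := zr w) = m" "p(w := zr w) = p" by auto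
    then show ?thesis unfolding E using True by (simp add: u0)
  next
    case False
    then have z: "\<sigma> m p = 0" using supp by blast
    have "(if m \<in> ?A then U0 (restr zr {w} m) zr else 0) = 0 \<or>
          cnj (if p \<in> ?A then U0 (restr zr {w} p) zr else 0) = 0"
      using False unfolding u0 by auto
    then show ?thesis unfolding E z by auto
  qed
qed

lemma step5:
  assumes supp: "\<forall>n n'. \<sigma> n n' \<noteq> 0 \<longrightarrow> n w = zr w \<and> n' w = zr w"
  shows "sem ty zr Xall (Apply (cnotK zr x w ex ew) {x, w}) \<sigma> m p =
    (if m \<in> assigns ty zr Xall \<and> cwp x w ex ew m then 1 else 0) * (\<sigma> (m(w := zr w)) (p(w := zr w)) *
    (if p \<in> assigns ty zr Xall \<and> cwp x w ex ew p then 1 else 0))"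
proof -
  let ?A = "assigns ty zr Xall"
  let ?L = "lift_op ty zr Xall {x, w} (cnotK zr x w ex ew)"
  have xw: "x \<noteq> w" using distinct(2) .
  have eqf: "n = q(w := zr w)" if nz: "?L q n \<noteq> 0" and nw: "n w = zr w" for q n
  proof -
    have ag: "\<And>v. v \<notin> {x, w} \<Longrightarrow> q v = n v" using lift_op_nz(3)[OF nz] .
    have "cnotK zr x w ex ew (restr zr {x, w} q) (restr zr {x, w} n) \<noteq> 0" using lift_op_nz(4)[OF nz] .
    then obtain a b where ab: "restr zr {x, w} n = zr(x := ex a, w := ew b)"
        "restr zr {x, w} q = zr(x := ex a, w := ew (xor2 a b))"
      unfolding cnotK_def by (auto split: if_splits)
    have "n x = ex a" "q x = ex a" using ab unfolding restr_xy[OF xw] by auto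
    show ?thesis
    proof
      fix u show "n u = (q(w := zr w)) u"
      proof (cases "u = x \<or> u = w")
        case True then show ?thesis using \<open>n x = ex a\<close> \<open>q x = ex a\<close> nw xw by auto
      next
        case False then show ?thesis using ag[of u] by auto
      qed
    qed
  qed
  have Lval: "?L q (q(w := zr w)) = (if q \<in> ?A \<and> cwp x w ex ew q then 1 else 0)" for q
  proof (cases "q \<in> ?A")
    case False then show ?thesis unfolding lift_op_def by simp
  next
    case True
    have qa: "q(w := zr w) \<in> ?A" using upd_zw[OF True] .
    have ag: "\<forall>v. v \<notin> {x, w} \<longrightarrow> q v = (q(w := zr w)) v" by simp
    have iw: "ew b = zr w \<longleftrightarrow> b = (False, False)" for b
      using type_w(2) inj_eq[OF injw, of b "(False, False)"] by auto
    have P: "(\<exists>a b. restr zr {x, w} (q(w := zr w)) = zr(x := ex a, w := ew b) \<and>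
                   restr zr {x, w} q = zr(x := ex a, w := ew (xor2 a b))) \<longleftrightarrow> cwp x w ex ew q"
    proof
      assume "\<exists>a b. restr zr {x, w} (q(w := zr w)) = zr(x := ex a, w := ew b) \<and>
                   restr zr {x, w} q = zr(x := ex a, w := ew (xor2 a b))"
      then obtain a b where h: "(q(w := zr w)) x = ex a" "(q(w := zr w)) w = ew b" "q x = ex a" "q w = ew (xor2 a b)"
        unfolding restr_xy[OF xw] by blast
      have "ew b = zr w" using h(2) by simp
      then have "b = (False, False)" using iw by blast
      then have "q w = ew a" using h(4) by (simp add: xor2_def)
      then show "cwp x w ex ew q" unfolding cwp_def using h(3) by blast
    next
      assume "cwp x w ex ew q"
      then obtain a where h: "q x = ex a" "q w = ew a" unfolding cwp_def by blast
      have "xor2 a (False, False) = a" by (simp add: xor2_def)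
      then have "restr zr {x, w} (q(w := zr w)) = zr(x := ex a, w := ew (False, False)) \<and>
                   restr zr {x, w} q = zr(x := ex a, w := ew (xor2 a (False, False)))"
        unfolding restr_xy[OF xw] using h xw type_w(2) by simp
      then show "\<exists>a b. restr zr {x, w} (q(w := zr w)) = zr(x := ex a, w := ew b) \<and>
                   restr zr {x, w} q = zr(x := ex a, w := ew (xor2 a b))" by blast
    qed
    have "?L q (q(w := zr w)) = (if cwp x w ex ew q then 1 else 0)"
      by (simp only: lift_op_def cnotK_def if_P[OF conjI[OF True conjI[OF qa ag]]] P)
    then show ?thesis using True by simp
  qed
  have "sem ty zr Xall (Apply (cnotK zr x w ex ew) {x, w}) \<sigma> m p =
     ?L m (m(w := zr w)) * (\<sigma> (m(w := zr w)) (p(w := zr w)) * cnj (?L p (p(w := zr w))))"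
  proof (rule sem_apply_single[where f="\<lambda>q. q(w := zr w)"])
    show "n = q(w := zr w)" if "?L q n \<noteq> 0" "\<sigma> n n' \<noteq> 0" for q n n'
      using eqf[OF that(1)] supp that(2) by blast
    show "n' = q(w := zr w)" if "?L q n' \<noteq> 0" "\<sigma> n n' \<noteq> 0" for q n n'
      using eqf[OF that(1)] supp that(2) by blast
  qed
  moreover have cj: "cnj (if b then 1 else 0 :: complex) = (if b then 1 else 0)" for b by simp
  ultimately show ?thesis unfolding Lval cj by blast
qed


lemma step6: "sem ty zr Xall (Init w) (\<lambda>m p. (if m \<in> assigns ty zr Xall \<and> cwp x w ex ew m then 1 else 0) *
    (S3 ty zr Xall x w ex ew \<rho> (m(w := zr w)) (p(w := zr w)) *
    (if p \<in> assigns ty zr Xall \<and> cwp x w ex ew p then 1 else 0))) = Fst ty zr Xall x w ex ew \<rho>"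
proof (intro ext)
  fix m p
  let ?A = "assigns ty zr Xall"
  let ?S5 = "\<lambda>m p. (if m \<in> assigns ty zr Xall \<and> cwp x w ex ew m then 1 else 0) *
    (S3 ty zr Xall x w ex ew \<rho> (m(w := zr w)) (p(w := zr w)) *
    (if p \<in> assigns ty zr Xall \<and> cwp x w ex ew p then 1 else 0))"
  show "sem ty zr Xall (Init w) ?S5 m p = Fst ty zr Xall x w ex ew \<rho> m p"
  proof (cases "m \<in> ?A \<and> p \<in> ?A \<and> m w = zr w \<and> p w = zr w")
    case False
    then show ?thesis unfolding sem_init[OF vars(3) type_w(1) types] Fst_def by auto
  next
    case True
    have cw: "cwp x w ex ew (q(w := ew l)) \<longleftrightarrow> q x = ex l" for q l
    proof -
      have "cwp x w ex ew (q(w := ew l)) \<longleftrightarrow> (\<exists>a. q x = ex a \<and> ew l = ew a)"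
        unfolding cwp_def using distinct(2) by simp
      also have "\<dots> \<longleftrightarrow> q x = ex l"
      proof
        assume "\<exists>a. q x = ex a \<and> ew l = ew a"
        then obtain a where h: "q x = ex a" "ew l = ew a" by blast
        have "l = a" using injD[OF injw h(2)] .
        then show "q x = ex l" using h(1) by simp
      qed blast
      finally show ?thesis .
    qed
    obtain a0 where a0: "m x = ex a0"
      using in_range_bij[where ty=ty and v=x and e=ex and zr=zr and Xall=Xall and m=m, OF type_x(1)] True vars(1) by blast
    have mm: "m(w := ew l, w := zr w) = m" "p(w := ew l, w := zr w) = p" for l
      using True by auto
    have trm: "?S5 (m(w := ew l)) (p(w := ew l)) =
        (if l = a0 then S3 ty zr Xall x w ex ew \<rho> m p * (if p x = m x then 1 else 0) else 0)" for l
    proof -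
      have A1: "m(w := ew l) \<in> ?A" "p(w := ew l) \<in> ?A" using True upd_w by auto
      have e1: "m x = ex l \<longleftrightarrow> l = a0" using a0 inj_eq[OF injx] by auto
      show ?thesis
      proof (cases "l = a0")
        case True
        have c1: "cwp x w ex ew (m(w := ew l))" using cw a0 True by simp
        have c2: "cwp x w ex ew (p(w := ew l)) \<longleftrightarrow> p x = m x" using cw a0 True by simp
        show ?thesis unfolding mm using A1 c1 c2 True by simp
      next
        case False
        have c1: "\<not> cwp x w ex ew (m(w := ew l))" using cw e1 False by simp
        show ?thesis unfolding mm using A1 c1 False by simp
      qed
    qed
    have "sem ty zr Xall (Init w) ?S5 m p = (\<Sum>l\<in>UNIV. ?S5 (m(w := ew l)) (p(w := ew l)))"
      unfolding sem_init[OF vars(3) type_w(1) types] by (simp only: if_P[OF True])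
    also have "\<dots> = (\<Sum>l\<in>UNIV. (if l = a0 then S3 ty zr Xall x w ex ew \<rho> m p * (if p x = m x then 1 else 0) else 0))"
      by (rule sum.cong[OF refl]) (rule trm)
    also have "\<dots> = S3 ty zr Xall x w ex ew \<rho> m p * (if p x = m x then 1 else 0)"
      by simp
    also have "\<dots> = Fst ty zr Xall x w ex ew \<rho> m p"
      using True unfolding S3_def Fst_def by auto
    finally show ?thesis .
  qed
qed

definition fM where "fM q = q(y := ey (pm (inv ex (q x)) (inv ey (q y))))"

lemma fM_eq: assumes "q x = ex k" "q y = ey b" shows "fM q = q(y := ey (pm k b))"
  unfolding fM_def using assms inv_f_f[OF injx] inv_f_f[OF injy] by simp

lemma ctrl_sem:
  assumes Mnz0: "\<forall>k b b'. M k b b' \<noteq> 0 \<longrightarrow> b' = pm k b"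
  shows "sem ty zr Xall (Apply (ctrlK zr x y ex ey M) {x, y}) \<sigma> m p =
    lift_op ty zr Xall {x, y} (ctrlK zr x y ex ey M) m (fM m) * (\<sigma> (fM m) (fM p) *
      cnj (lift_op ty zr Xall {x, y} (ctrlK zr x y ex ey M) p (fM p)))"
proof (rule sem_apply_single[where f=fM])
  have Mnz: "b' = pm k b" if "M k b b' \<noteq> 0" for k b b' using Mnz0 that by blast
  have eq: "n = fM q" if nz: "lift_op ty zr Xall {x, y} (ctrlK zr x y ex ey M) q n \<noteq> 0" for q n
  proof -
    obtain k b b' where h: "q x = ex k" "q y = ey b" "n = q(y := ey b')" "M k b b' \<noteq> 0"
      using ctrl_nz[OF distinct(1) nz] by blast
    show ?thesis using h Mnz[OF h(4)] fM_eq[OF h(1,2)] by simp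
  qed
  show "\<And>m n n'. lift_op ty zr Xall {x, y} (ctrlK zr x y ex ey M) m n \<noteq> 0 \<Longrightarrow> \<sigma> n n' \<noteq> 0 \<Longrightarrow> n = fM m"
    using eq by blast
  show "\<And>m n n'. lift_op ty zr Xall {x, y} (ctrlK zr x y ex ey M) m n' \<noteq> 0 \<Longrightarrow> \<sigma> n n' \<noteq> 0 \<Longrightarrow> n' = fM m"
    using eq by blast
qed

lemma Lc_val:
  assumes qA: "q \<in> assigns ty zr Xall" and h: "q x = ex k" "q y = ey b"
  shows "lift_op ty zr Xall {x, y} (ctrlK zr x y ex ey M) q (q(y := ey b')) = M k b b'"
  by (rule ctrl_val[OF distinct(1) injx injy qA upd_y[OF qA] h])

lemma Lc_out:
  assumes "q \<notin> assigns ty zr Xall"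
  shows "lift_op ty zr Xall {x, y} (ctrlK zr x y ex ey M) q n = 0"
  using assms unfolding lift_op_def by simp

lemma decM_nz': "\<forall>k b b'. decM k b b' \<noteq> 0 \<longrightarrow> b' = pm k b" using decM_nz by blast
lemma encM_nz': "\<forall>k b b'. encM k b b' \<noteq> 0 \<longrightarrow> b' = pm k b" using encM_nz by blast

lemma enc_dec:
  assumes supp: "\<And>n n'. \<sigma> n n' \<noteq> 0 \<Longrightarrow> n \<in> assigns ty zr Xall \<and> n' \<in> assigns ty zr Xall"
  shows "sem ty zr Xall (Apply (ctrlK zr x y ex ey decM) {x, y}) (sem ty zr Xall (Apply (ctrlK zr x y ex ey encM) {x, y}) \<sigma>) = \<sigma>"
proof (intro ext)
  fix m p
  let ?A = "assigns ty zr Xall"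
  let ?LD = "lift_op ty zr Xall {x, y} (ctrlK zr x y ex ey decM)"
  let ?LE = "lift_op ty zr Xall {x, y} (ctrlK zr x y ex ey encM)"
  have D: "sem ty zr Xall (Apply (ctrlK zr x y ex ey decM) {x, y}) (sem ty zr Xall (Apply (ctrlK zr x y ex ey encM) {x, y}) \<sigma>) m p
     = ?LD m (fM m) * ((?LE (fM m) (fM (fM m)) * (\<sigma> (fM (fM m)) (fM (fM p)) * cnj (?LE (fM p) (fM (fM p))))) * cnj (?LD p (fM p)))"
    by (subst ctrl_sem[OF decM_nz'], subst ctrl_sem[OF encM_nz'], rule refl)
  have one: "?LD q (fM q) * ?LE (fM q) (fM (fM q)) = 1 \<and> fM (fM q) = q" if qA: "q \<in> ?A" for q
  proof -
    obtain k where k: "q x = ex k" using in_range_bij[OF type_x(1) qA vars(1)] by blast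
    obtain b where b: "q y = ey b" using in_range_bij[OF type_y(1) qA vars(2)] by blast
    have f1: "fM q = q(y := ey (pm k b))" by (rule fM_eq[OF k b])
    have k1: "(fM q) x = ex k" "(fM q) y = ey (pm k b)" using f1 k distinct(1) by auto
    have f2: "fM (fM q) = (fM q)(y := ey b)" using fM_eq[OF k1] by simp
    have f3: "(fM q)(y := ey b) = q" using f1 b by auto
    have v1: "?LD q (fM q) = decM k b (pm k b)" unfolding f1 by (rule Lc_val[OF qA k b])
    have fA: "fM q \<in> ?A" unfolding f1 by (rule upd_y[OF qA])
    have v2: "?LE (fM q) (fM (fM q)) = encM k (pm k b) b" unfolding f2 by (rule Lc_val[OF fA k1])
    show ?thesis using dec_enc_one[of k b] v1 v2 f2 f3 by simp
  qed
  show "sem ty zr Xall (Apply (ctrlK zr x y ex ey decM) {x, y}) (sem ty zr Xall (Apply (ctrlK zr x y ex ey encM) {x, y}) \<sigma>) m p = \<sigma> m p"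
  proof (cases "m \<in> ?A \<and> p \<in> ?A")
    case True
    have om0: "?LD m (fM m) * ?LE (fM m) (fM (fM m)) = 1 \<and> fM (fM m) = m" using one[of m] True by blast
    have op0: "?LD p (fM p) * ?LE (fM p) (fM (fM p)) = 1 \<and> fM (fM p) = p" using one[of p] True by blast
    have om: "?LD m (fM m) * ?LE (fM m) (fM (fM m)) = 1" "fM (fM m) = m" using om0 by (rule conjunct1, rule conjunct2)
    have op: "?LD p (fM p) * ?LE (fM p) (fM (fM p)) = 1" "fM (fM p) = p" using op0 by (rule conjunct1, rule conjunct2)
    have "?LD m (fM m) * ((?LE (fM m) (fM (fM m)) * (\<sigma> (fM (fM m)) (fM (fM p)) * cnj (?LE (fM p) (fM (fM p))))) * cnj (?LD p (fM p)))
       = (?LD m (fM m) * ?LE (fM m) (fM (fM m))) * \<sigma> (fM (fM m)) (fM (fM p)) * cnj (?LD p (fM p) * ?LE (fM p) (fM (fM p)))"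
      by (simp add: algebra_simps)
    also have "\<dots> = \<sigma> m p" unfolding om(1) op(1) unfolding om(2) op(2) by simp
    finally show ?thesis unfolding D .
  next
    case False
    then have z: "\<sigma> m p = 0" using supp by blast
    have "?LD m (fM m) = 0 \<or> ?LD p (fM p) = 0" using False Lc_out by blast
    then show ?thesis unfolding D z by auto
  qed
qed

lemma prog_sem:
  assumes supp: "\<And>n n'. \<rho> n n' \<noteq> 0 \<Longrightarrow> n \<in> assigns ty zr Xall \<and> n' \<in> assigns ty zr Xall"
  shows "sem ty zr Xall
     (Seq
       (Seq (Init x) (Seq (Apply UK {x}) (Seq (Init w) (Seq (Apply U0 {w})
         (Seq (Apply (cnotK zr x w ex ew) {x, w}) (Seq (Init w) (Apply U0 {w})))))))
       (Seq (Apply (ctrlK zr x y ex ey encM) {x, y})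
            (Apply (ctrlK zr x y ex ey decM) {x, y}))) \<rho> = Fst ty zr Xall x w ex ew \<rho>"
proof -
  let ?A = "assigns ty zr Xall"
  have s3supp: "\<And>n n'. S3 ty zr Xall x w ex ew \<rho> n n' \<noteq> 0 \<Longrightarrow> n \<in> ?A \<and> n' \<in> ?A \<and> n w = zr w \<and> n' w = zr w"
    unfolding S3_def by (auto split: if_splits)
  have fsupp: "\<And>n n'. Fst ty zr Xall x w ex ew \<rho> n n' \<noteq> 0 \<Longrightarrow> n \<in> ?A \<and> n' \<in> ?A \<and> n w = zr w \<and> n' w = zr w"
    unfolding Fst_def by (auto split: if_splits)
  have e4: "sem ty zr Xall (Apply U0 {w}) (S3 ty zr Xall x w ex ew \<rho>) = S3 ty zr Xall x w ex ew \<rho>"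
    by (rule U0id[OF s3supp])
  have e5: "sem ty zr Xall (Apply (cnotK zr x w ex ew) {x, w}) (S3 ty zr Xall x w ex ew \<rho>) =
     (\<lambda>m p. (if m \<in> assigns ty zr Xall \<and> cwp x w ex ew m then 1 else 0) *
    (S3 ty zr Xall x w ex ew \<rho> (m(w := zr w)) (p(w := zr w)) *
    (if p \<in> assigns ty zr Xall \<and> cwp x w ex ew p then 1 else 0)))"
    by (intro ext step5) (use s3supp in blast)
  have e7: "sem ty zr Xall (Apply U0 {w}) (Fst ty zr Xall x w ex ew \<rho>) = Fst ty zr Xall x w ex ew \<rho>"
    by (rule U0id[OF fsupp])
  have fsupp2: "\<And>n n'. Fst ty zr Xall x w ex ew \<rho> n n' \<noteq> 0 \<Longrightarrow> n \<in> ?A \<and> n' \<in> ?A"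
    using fsupp by blast
  have e8: "sem ty zr Xall (Apply (ctrlK zr x y ex ey decM) {x, y}) (sem ty zr Xall (Apply (ctrlK zr x y ex ey encM) {x, y})
     (Fst ty zr Xall x w ex ew \<rho>)) = Fst ty zr Xall x w ex ew \<rho>"
    by (rule enc_dec) (use fsupp2 in blast)
  show ?thesis
    by (simp only: sem.simps(2) step12 step3 e4 e5 step6 e7 e8)
qed


lemma chi_decomp:
  assumes dec: "decomp ty zr Xall \<rho> \<phi>"
  shows "decomp ty zr Xall
    (\<lambda>m p. if m \<in> assigns ty zr Xall \<and> m w = zr w \<and> m x = ex q \<and> p \<in> assigns ty zr Xall \<and> p w = zr w \<and> p x = ex q
       then \<rho> (m(x := ex k, w := ew l)) (p(x := ex k, w := ew l)) / 4 else 0)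
    (\<lambda>i m. if m \<in> assigns ty zr Xall \<and> m w = zr w \<and> m x = ex q then \<phi> i (m(x := ex k, w := ew l)) / 2 else 0)"
proof -
  let ?A = "assigns ty zr Xall"
  define S where "S = {m. m \<in> ?A \<and> m w = zr w \<and> m x = ex q}"
  define g where "g m = m(x := ex k, w := ew l)" for m :: "'v \<Rightarrow> 'a"
  define chi where "chi i m = (if m \<in> S then \<phi> i (g m) / 2 else 0)" for i m
  have chi_eq: "(\<lambda>i m. if m \<in> ?A \<and> m w = zr w \<and> m x = ex q then \<phi> i (m(x := ex k, w := ew l)) / 2 else 0) = chi"
    unfolding chi_def S_def g_def by simp
  have inj: "inj_on g S"
  proof
    fix m m' assume a: "m \<in> S" "m' \<in> S" "g m = g m'"
    show "m = m'"
    proof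
      fix v
      show "m v = m' v"
      proof (cases "v = x \<or> v = w")
        case True then show ?thesis using a(1,2) unfolding S_def by auto
      next
        case False
        have "g m v = g m' v" using a(3) by simp
        then show ?thesis using False unfolding g_def by simp
      qed
    qed
  qed
  have phs: "(\<lambda>n. (cmod (\<phi> i n))\<^sup>2) summable_on UNIV" for i
    using ell2_sq_summable[OF decomp_ell2[OF dec]] .
  have s2: "((\<lambda>n. (cmod (\<phi> i n))\<^sup>2) \<circ> g) summable_on S" for i
  proof -
    have "(\<lambda>n. (cmod (\<phi> i n))\<^sup>2) summable_on g ` S" by (rule summable_on_subset[OF phs]) auto
    then show ?thesis using summable_on_reindex[OF inj] by blast
  qed
  have sq_eq: "(cmod (chi i m))\<^sup>2 = (if m \<in> S then (cmod (\<phi> i (g m)))\<^sup>2 * (1/4) else 0)" for i m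
    unfolding chi_def by (simp add: norm_divide power_divide)
  have chis: "(\<lambda>m. (cmod (chi i m))\<^sup>2) summable_on UNIV" for i
  proof (rule summable_on_cong_neutral[THEN iffD1, OF _ _ _ summable_on_cmult_left[OF s2[of i], of "1/4"]])
    show "\<And>m. m \<in> UNIV - S \<Longrightarrow> (cmod (chi i m))\<^sup>2 = 0" unfolding sq_eq by simp
    show "\<And>m. m \<in> S \<inter> UNIV \<Longrightarrow> ((\<lambda>n. (cmod (\<phi> i n))\<^sup>2) \<circ> g) m * (1/4) = (cmod (chi i m))\<^sup>2"
      unfolding sq_eq by simp
  qed simp
  have chie: "chi i \<in> ell2 ty zr Xall" for i
  proof -
    have "\<forall>m. chi i m \<noteq> 0 \<longrightarrow> m \<in> ?A" unfolding chi_def S_def by simp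
    then show ?thesis unfolding ell2_def using chis by blast
  qed
  have nb: "(l2norm (chi i))\<^sup>2 \<le> (l2norm (\<phi> i))\<^sup>2 * (1/4)" for i
  proof -
    have "(l2norm (chi i))\<^sup>2 = infsum (\<lambda>m. (cmod (chi i m))\<^sup>2) UNIV" by (rule l2norm_sq)
    also have "\<dots> = infsum (\<lambda>m. ((\<lambda>n. (cmod (\<phi> i n))\<^sup>2) \<circ> g) m * (1/4)) S"
      by (rule infsum_cong_neutral) (auto simp: sq_eq)
    also have "\<dots> = infsum ((\<lambda>n. (cmod (\<phi> i n))\<^sup>2) \<circ> g) S * (1/4)" by (rule infsum_cmult_left')
    also have "\<dots> = infsum (\<lambda>n. (cmod (\<phi> i n))\<^sup>2) (g ` S) * (1/4)"
      by (simp only: infsum_reindex[OF inj])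
    also have "\<dots> \<le> infsum (\<lambda>n. (cmod (\<phi> i n))\<^sup>2) UNIV * (1/4)"
    proof (rule mult_right_mono)
      show "infsum (\<lambda>n. (cmod (\<phi> i n))\<^sup>2) (g ` S) \<le> infsum (\<lambda>n. (cmod (\<phi> i n))\<^sup>2) UNIV"
        by (rule infsum_mono2[OF summable_on_subset[OF phs] phs]) auto
    qed simp
    also have "\<dots> = (l2norm (\<phi> i))\<^sup>2 * (1/4)" by (simp add: l2norm_sq)
    finally show ?thesis .
  qed
  have sl: "summable (\<lambda>i. (l2norm (\<phi> i))\<^sup>2)" using dec unfolding decomp_def by blast
  have cs: "summable (\<lambda>i. (l2norm (chi i))\<^sup>2)"
  proof (rule summable_comparison_test'[OF summable_mult2[OF sl, of "1/4"]])
    fix i :: nat show "norm ((l2norm (chi i))\<^sup>2) \<le> (l2norm (\<phi> i))\<^sup>2 * (1/4)" using nb[of i] by simp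
  qed
  have sm: "(\<lambda>i. chi i m * cnj (chi i p)) sums
      (if m \<in> ?A \<and> m w = zr w \<and> m x = ex q \<and> p \<in> ?A \<and> p w = zr w \<and> p x = ex q
       then \<rho> (m(x := ex k, w := ew l)) (p(x := ex k, w := ew l)) / 4 else 0)" for m p
  proof (cases "m \<in> S \<and> p \<in> S")
    case True
    have "(\<lambda>i. chi i m * cnj (chi i p)) = (\<lambda>i. \<phi> i (g m) * cnj (\<phi> i (g p)) / 4)"
      using True unfolding chi_def by (intro ext) (simp add: complex_cnj_divide)
    moreover have "(\<lambda>i. \<phi> i (g m) * cnj (\<phi> i (g p)) / 4) sums (\<rho> (g m) (g p) / 4)"
      by (rule sums_divide[OF decomp_sums[OF dec]])
    ultimately show ?thesis using True unfolding S_def g_def by simp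
  next
    case False
    have "(\<lambda>i. chi i m * cnj (chi i p)) = (\<lambda>i. 0)" using False unfolding chi_def by (intro ext) auto
    then show ?thesis using False unfolding S_def by auto
  qed
  show ?thesis unfolding chi_eq decomp_def using chie cs sm by blast
qed

lemma sum_UNIV_pair: "(\<Sum>t\<in>UNIV. f t) = (\<Sum>a\<in>UNIV. \<Sum>b\<in>UNIV. (f (a, b) :: 'c::comm_monoid_add))"
proof -
  have "(\<Sum>a\<in>UNIV. \<Sum>b\<in>UNIV. f (a, b)) = (\<Sum>(a, b)\<in>UNIV \<times> UNIV. f (a, b))" by (rule sum.cartesian_product)
  then show ?thesis by (simp add: UNIV_Times_UNIV case_prod_eta)
qed

lemma sum_UNIV_triple: "(\<Sum>t\<in>UNIV. f t) = (\<Sum>q\<in>UNIV. \<Sum>l\<in>UNIV. \<Sum>k\<in>UNIV. (f (q, l, k) :: 'c::comm_monoid_add))"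
  by (simp only: sum_UNIV_pair[of f] sum_UNIV_pair[of "\<lambda>r. f (_, r)"])

lemma Fst_sum:
  "Fst ty zr Xall x w ex ew \<rho> = (\<lambda>m p. \<Sum>t\<in>UNIV. (case t of (q, l, k) \<Rightarrow>
    if m \<in> assigns ty zr Xall \<and> m w = zr w \<and> m x = ex q \<and> p \<in> assigns ty zr Xall \<and> p w = zr w \<and> p x = ex q
       then \<rho> (m(x := ex k, w := ew l)) (p(x := ex k, w := ew l)) / 4 else 0))"
proof (intro ext)
  fix m p
  let ?A = "assigns ty zr Xall"
  let ?C = "m \<in> ?A \<and> p \<in> ?A \<and> m w = zr w \<and> p w = zr w"
  let ?T = "\<lambda>l k. \<rho> (m(x := ex k, w := ew l)) (p(x := ex k, w := ew l)) / 4"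
  have "(\<Sum>t\<in>UNIV. (case t of (q, l, k) \<Rightarrow>
    if m \<in> ?A \<and> m w = zr w \<and> m x = ex q \<and> p \<in> ?A \<and> p w = zr w \<and> p x = ex q then ?T l k else 0))
    = (\<Sum>q\<in>UNIV. \<Sum>l\<in>UNIV. \<Sum>k\<in>UNIV.
        (if m \<in> ?A \<and> m w = zr w \<and> m x = ex q \<and> p \<in> ?A \<and> p w = zr w \<and> p x = ex q then ?T l k else 0))"
    by (subst sum_UNIV_triple) (simp only: prod.case)
  also have "\<dots> = (\<Sum>q\<in>UNIV. of_bool (?C \<and> m x = ex q \<and> p x = ex q) * (\<Sum>l\<in>UNIV. \<Sum>k\<in>UNIV. ?T l k))"
    by (intro sum.cong refl) (auto simp: sum_distrib_left)
  also have "\<dots> = Fst ty zr Xall x w ex ew \<rho> m p"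
  proof (cases ?C)
    case False
    have z: "of_bool (?C \<and> m x = ex q \<and> p x = ex q) = (0::complex)" for q using False by auto
    have "Fst ty zr Xall x w ex ew \<rho> m p = 0" unfolding Fst_def using False by auto
    then show ?thesis by (simp only: z mult_zero_left sum.neutral_const)
  next
    case True
    obtain a0 where a0: "m x = ex a0"
      using in_range_bij[where ty=ty and v=x and e=ex and zr=zr and Xall=Xall and m=m, OF type_x(1)] True vars(1) by blast
    have e: "(?C \<and> m x = ex q \<and> p x = ex q) \<longleftrightarrow> q = a0 \<and> p x = m x" for q
      using True a0 inj_eq[OF injx] by auto
    have "(\<Sum>q\<in>UNIV. of_bool (?C \<and> m x = ex q \<and> p x = ex q) * (\<Sum>l\<in>UNIV. \<Sum>k\<in>UNIV. ?T l k))
        = (\<Sum>q\<in>UNIV. if q = a0 then of_bool (p x = m x) * (\<Sum>l\<in>UNIV. \<Sum>k\<in>UNIV. ?T l k) else 0)"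
      by (intro sum.cong refl) (simp only: e, auto)
    also have "\<dots> = of_bool (p x = m x) * (\<Sum>l\<in>UNIV. \<Sum>k\<in>UNIV. ?T l k)" by simp
    also have "\<dots> = Fst ty zr Xall x w ex ew \<rho> m p"
      using True unfolding Fst_def by (auto simp: sum_divide_distrib)
    finally show ?thesis .
  qed
  finally show "Fst ty zr Xall x w ex ew \<rho> m p = (\<Sum>t\<in>UNIV. (case t of (q, l, k) \<Rightarrow>
    if m \<in> ?A \<and> m w = zr w \<and> m x = ex q \<and> p \<in> ?A \<and> p w = zr w \<and> p x = ex q then ?T l k else 0))" ..
qed

lemma Fst_mixed:
  assumes dec: "decomp ty zr Xall \<rho> \<phi>"
  shows "is_mixed ty zr Xall (Fst ty zr Xall x w ex ew \<rho>)"
proof -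
  let ?U = "UNIV :: ((bool \<times> bool) \<times> (bool \<times> bool) \<times> (bool \<times> bool)) set"
  obtain h where h: "bij_betw h {0..<card ?U} ?U" using ex_bij_betw_nat_finite[of ?U] by auto
  have h': "bij_betw h {..<card ?U} ?U" using h by (simp add: atLeast0LessThan)
  have N: "card ?U > 0" by (simp add: card_gt_0_iff)
  define r where "r t = (case t of (q, l, k) \<Rightarrow> (\<lambda>m p.
    if m \<in> assigns ty zr Xall \<and> m w = zr w \<and> m x = ex q \<and> p \<in> assigns ty zr Xall \<and> p w = zr w \<and> p x = ex q
       then \<rho> (m(x := ex k, w := ew l)) (p(x := ex k, w := ew l)) / 4 else 0))" for t
  define th where "th t = (case t of (q, l, k) \<Rightarrow>
    (\<lambda>i m. if m \<in> assigns ty zr Xall \<and> m w = zr w \<and> m x = ex q then \<phi> i (m(x := ex k, w := ew l)) / 2 else 0))" for t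
  have "decomp ty zr Xall (r t) (th t)" for t
    unfolding r_def th_def by (cases t) (auto intro: chi_decomp[OF dec])
  then have "decomp ty zr Xall (\<lambda>m p. \<Sum>t\<in>UNIV. r t m p) (\<lambda>j. th (h (j mod card ?U)) (j div card ?U))"
    by (rule decomp_combine[OF N h'])
  moreover have "(\<lambda>m p. \<Sum>t\<in>UNIV. r t m p) = Fst ty zr Xall x w ex ew \<rho>"
    unfolding Fst_sum r_def by (intro ext sum.cong refl) (auto split: prod.splits)
  ultimately show ?thesis unfolding is_mixed_def by auto
qed


lemma Rel_Fst:
  assumes R: "Rel ty zr Xall {y, z} \<psi> \<rho>" and zx: "z \<noteq> x" and zw: "z \<noteq> w"
  shows "Rel ty zr Xall {y, z} \<psi> (Fst ty zr Xall x w ex ew \<rho>)"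
proof -
  let ?A = "assigns ty zr Xall"
  let ?Y = "{y, z}"
  have xY: "x \<notin> ?Y" "w \<notin> ?Y" using distinct zx zw by auto
  have lin: "Fst ty zr Xall x w ex ew \<rho> m p * \<psi> (restr zr ?Y m') = Fst ty zr Xall x w ex ew \<rho> m' p * \<psi> (restr zr ?Y m)"
    if ag: "agree ty zr Xall ?Y m m'" for m m' p
  proof -
    have mA: "m \<in> ?A" "m' \<in> ?A" and oth: "\<And>v. v \<notin> ?Y \<Longrightarrow> m v = m' v" using ag unfolding agree_def by auto
    have mx: "m x = m' x" "m w = m' w" using oth xY by auto
    show ?thesis
    proof (cases "p \<in> ?A \<and> m w = zr w \<and> p w = zr w \<and> m x = p x")
      case False
      then show ?thesis unfolding Fst_def using mx by auto
    next
      case True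
      have tm: "\<rho> (m(x := ex k, w := ew l)) (p(x := ex k, w := ew l)) * \<psi> (restr zr ?Y m') =
                \<rho> (m'(x := ex k, w := ew l)) (p(x := ex k, w := ew l)) * \<psi> (restr zr ?Y m)" for k l
      proof -
        have ag2: "agree ty zr Xall ?Y (m(x := ex k, w := ew l)) (m'(x := ex k, w := ew l))"
          unfolding agree_def using upd_w[OF upd_x[OF mA(1)]] upd_w[OF upd_x[OF mA(2)]] oth by auto
        have rr: "restr zr ?Y (q(x := ex k, w := ew l)) = restr zr ?Y q" for q
        proof
          fix v show "restr zr ?Y (q(x := ex k, w := ew l)) v = restr zr ?Y q v"
            unfolding restr_def using xY by auto
        qed
        have "\<rho> (m(x := ex k, w := ew l)) (p(x := ex k, w := ew l)) * \<psi> (restr zr ?Y (m'(x := ex k, w := ew l))) =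
              \<rho> (m'(x := ex k, w := ew l)) (p(x := ex k, w := ew l)) * \<psi> (restr zr ?Y (m(x := ex k, w := ew l)))"
          using R ag2 unfolding Rel_def by blast
        then show ?thesis unfolding rr .
      qed
      have "Fst ty zr Xall x w ex ew \<rho> m p * \<psi> (restr zr ?Y m') =
         1/4 * (\<Sum>l\<in>UNIV. \<Sum>k\<in>UNIV. \<rho> (m(x := ex k, w := ew l)) (p(x := ex k, w := ew l)) * \<psi> (restr zr ?Y m'))"
        using True mA unfolding Fst_def by (simp add: sum_distrib_right)
      also have "\<dots> = 1/4 * (\<Sum>l\<in>UNIV. \<Sum>k\<in>UNIV. \<rho> (m'(x := ex k, w := ew l)) (p(x := ex k, w := ew l)) * \<psi> (restr zr ?Y m))"
        unfolding tm ..
      also have "\<dots> = Fst ty zr Xall x w ex ew \<rho> m' p * \<psi> (restr zr ?Y m)"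
        using True mA mx unfolding Fst_def by (simp add: sum_distrib_right)
      finally show ?thesis .
    qed
  qed
  have z: "Fst ty zr Xall x w ex ew \<rho> m p = 0" if "\<psi> = (\<lambda>_. 0)" for m p
    using R that unfolding Rel_def Fst_def by simp
  show ?thesis unfolding Rel_def using lin z by blast
qed

end

lemma Rel_lift:
  assumes R: "Rel ty zr W Y \<psi> \<sigma>"
    and supp: "\<And>m p. \<sigma> m p \<noteq> 0 \<Longrightarrow> m \<in> assigns ty zr W \<and> p \<in> assigns ty zr W"
    and Y: "Y \<subseteq> W" and WV: "W \<subseteq> V"
  shows "Rel ty zr V Y \<psi> \<sigma>"
proof -
  have lin: "\<sigma> m p * \<psi> (restr zr Y m') = \<sigma> m' p * \<psi> (restr zr Y m)" if ag: "agree ty zr V Y m m'" for m m' p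
  proof -
    have mV: "m \<in> assigns ty zr V" "m' \<in> assigns ty zr V" and oth: "\<And>v. v \<notin> Y \<Longrightarrow> m v = m' v"
      using ag unfolding agree_def by auto
    have iff: "m \<in> assigns ty zr W \<longleftrightarrow> m' \<in> assigns ty zr W"
    proof -
      have "q' \<in> assigns ty zr W" if h: "q \<in> assigns ty zr W" "q' \<in> assigns ty zr V" "\<And>v. v \<notin> Y \<Longrightarrow> q v = q' v" for q q'
      proof -
        have "q' v \<in> ty v" if "v \<in> W" for v using h(2) that WV unfolding assigns_def by blast
        moreover have "q' v = zr v" if "v \<notin> W" for v
        proof -
          have "v \<notin> Y" using that Y by blast
          then have "q' v = q v" using h(3) by simp
          also have "\<dots> = zr v" using h(1) that unfolding assigns_def by blast
          finally show ?thesis .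
        qed
        ultimately show ?thesis unfolding assigns_def by blast
      qed
      moreover have "\<And>v. v \<notin> Y \<Longrightarrow> m' v = m v" using oth by simp
      ultimately show ?thesis using mV oth by blast
    qed
    show ?thesis
    proof (cases "m \<in> assigns ty zr W")
      case True
      then have "agree ty zr W Y m m'" using iff oth unfolding agree_def by auto
      then show ?thesis using R unfolding Rel_def by blast
    next
      case False
      then have "\<sigma> m p = 0" "\<sigma> m' p = 0" using supp iff by blast+
      then show ?thesis by simp
    qed
  qed
  show ?thesis using R lin unfolding Rel_def by blast
qed

theorem mainTheorem2:
  fixes ty :: "'v \<Rightarrow> 'a set" and zr :: "'v \<Rightarrow> 'a"
    and Xall E U :: "'v set" and x y w z :: 'v
    and ex ew :: "bool \<times> bool \<Rightarrow> 'a" and ey :: "bool \<Rightarrow> 'a"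
    and UK U0 :: "('v \<Rightarrow> 'a) \<Rightarrow> ('v \<Rightarrow> 'a) \<Rightarrow> complex"
    and \<psi> :: "('v \<Rightarrow> 'a) \<Rightarrow> complex"
  assumes types: "\<forall>v. zr v \<in> ty v"
    and kinds: "Xall \<inter> E = {}" "Xall \<inter> U = {}" "E \<inter> U = {}"
    and vars: "x \<in> Xall" "y \<in> Xall" "w \<in> Xall" "z \<in> Xall"
    and distinct: "x \<noteq> y" "x \<noteq> w" "y \<noteq> w" "z \<noteq> x" "z \<noteq> y" "z \<noteq> w"
    and type_x: "bij_betw ex UNIV (ty x)" "ex (False, False) = zr x"
    and type_y: "bij_betw ey UNIV (ty y)" "ey False = zr y"
    and type_w: "bij_betw ew UNIV (ty w)" "ew (False, False) = zr w"
    and UK: "is_isometry ty zr {x} UK"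
            "\<forall>m. UK m zr = (if \<exists>k. m = zr(x := ex k) then 1/2 else 0)"
    and U0: "is_isometry ty zr {w} U0"
            "\<forall>m. U0 m zr = (if m = zr then 1 else 0)"
    and psi: "\<psi> \<in> ell2 ty zr {y, z}"
  shows "hoare ty zr Xall E U
     (eqq ty zr (Xall \<union> E \<union> U) {y, z} \<psi>)
     (Seq
       (Seq (Init x) (Seq (Apply UK {x}) (Seq (Init w) (Seq (Apply U0 {w})
         (Seq (Apply (cnotK zr x w ex ew) {x, w}) (Seq (Init w) (Apply U0 {w})))))))
       (Seq (Apply (ctrlK zr x y ex ey encM) {x, y})
            (Apply (ctrlK zr x y ex ey decM) {x, y})))
     (eqq ty zr (Xall \<union> E \<union> U) {y, z} \<psi>)"
  unfolding hoare_def
proof (intro allI impI, elim conjE)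
  fix \<rho>
  assume mix: "is_mixed ty zr Xall \<rho>" and pre: "sat ty zr Xall E U \<rho> (eqq ty zr (Xall \<union> E \<union> U) {y, z} \<psi>)"
  let ?V = "Xall \<union> E \<union> U"
  let ?Y = "{y, z}"
  let ?A = "assigns ty zr Xall"
  have YX: "?Y \<subseteq> Xall" using vars by auto
  have YV: "?Y \<subseteq> ?V" using vars by auto
  have XV: "Xall \<subseteq> ?V" by auto
  have disj: "Xall \<inter> (E \<union> U) = {}" using kinds by auto
  obtain \<phi> where dec: "decomp ty zr Xall \<rho> \<phi>" using mix unfolding is_mixed_def by blast
  have supp: "\<And>n n'. \<rho> n n' \<noteq> 0 \<Longrightarrow> n \<in> ?A \<and> n' \<in> ?A" using decomp_supp[OF dec] by blast
  obtain \<rho>0 where r0: "is_mixed ty zr ?V \<rho>0" "supp ty zr ?V \<rho>0 \<subseteq> eqq ty zr ?V ?Y \<psi>"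
      "ptrace ty zr Xall (E \<union> U) \<rho>0 = \<rho>"
    using pre unfolding sat_def by blast
  define \<theta> where "\<theta> = (SOME \<theta>. decomp ty zr ?V \<rho>0 \<theta>)"
  have dth: "decomp ty zr ?V \<rho>0 \<theta>" unfolding \<theta>_def using r0(1) unfolding is_mixed_def by (rule someI_ex)
  have thP: "\<theta> i \<in> Pset ty zr ?V ?Y \<psi>" for i
  proof -
    have "\<theta> i \<in> supp ty zr ?V \<rho>0" unfolding supp_def \<theta>_def[symmetric] by (rule decomp_in_cspan[OF dth])
    then show ?thesis using r0(2) eqq_Pset[OF YV psi] by blast
  qed
  have R0: "Rel ty zr ?V ?Y \<psi> \<rho>0" by (rule D1[OF dth thP])
  have R: "Rel ty zr Xall ?Y \<psi> \<rho>"
    using Rel_ptrace[OF R0 _ disj YX] r0(3) by (simp add: Un_assoc)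
  note ctx = types vars(1) vars(2) vars(3) distinct(1) distinct(2) distinct(3) type_x(1) type_x(2)
     type_y(1) type_w(1) type_w(2) UK(2) U0(2)
  have S: "sem ty zr Xall
     (Seq
       (Seq (Init x) (Seq (Apply UK {x}) (Seq (Init w) (Seq (Apply U0 {w})
         (Seq (Apply (cnotK zr x w ex ew) {x, w}) (Seq (Init w) (Apply U0 {w})))))))
       (Seq (Apply (ctrlK zr x y ex ey encM) {x, y})
            (Apply (ctrlK zr x y ex ey decM) {x, y}))) \<rho> = Fst ty zr Xall x w ex ew \<rho>"
    by (rule prog_sem[where ty=ty and zr=zr and Xall=Xall and x=x and y=y and w=w and ex=ex and ew=ew and ey=ey and UK=UK and ?U0.0=U0, OF ctx supp])
  let ?F = "Fst ty zr Xall x w ex ew \<rho>"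
  have Fmix: "is_mixed ty zr Xall ?F" by (rule Fst_mixed[where ty=ty and zr=zr and Xall=Xall and x=x and y=y and w=w and ex=ex and ew=ew and ey=ey and UK=UK and ?U0.0=U0, OF ctx dec])
  obtain ch where dF: "decomp ty zr Xall ?F ch" using Fmix unfolding is_mixed_def by blast
  have Fsupp: "\<And>m p. ?F m p \<noteq> 0 \<Longrightarrow> m \<in> ?A \<and> p \<in> ?A" unfolding Fst_def by (auto split: if_splits)
  have RF: "Rel ty zr Xall ?Y \<psi> ?F" by (rule Rel_Fst[where ty=ty and zr=zr and Xall=Xall and x=x and y=y and w=w and ex=ex and ew=ew and ey=ey and UK=UK and ?U0.0=U0, OF ctx R distinct(4) distinct(6)])
  have RFV: "Rel ty zr ?V ?Y \<psi> ?F" by (rule Rel_lift[OF RF Fsupp YX XV])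
  have mixV: "is_mixed ty zr ?V ?F" using decomp_mono[OF dF XV types] unfolding is_mixed_def by blast
  have mixXE: "is_mixed ty zr (Xall \<union> E) ?F" using decomp_mono[OF dF _ types] unfolding is_mixed_def by blast
  have sepF: "separable ty zr (Xall \<union> E) U ?F"
  proof (rule separable_triv[OF mixXE _ _ types])
    show "\<And>m p. ?F m p \<noteq> 0 \<Longrightarrow> m \<in> assigns ty zr (Xall \<union> E) \<and> p \<in> assigns ty zr (Xall \<union> E)"
      using Fsupp assigns_mono[of Xall "Xall \<union> E" zr ty] types by blast
    show "(Xall \<union> E) \<inter> U = {}" using kinds by auto
  qed
  have suppF: "supp ty zr ?V ?F \<subseteq> eqq ty zr ?V ?Y \<psi>"
  proof -
    define \<theta>' where "\<theta>' = (SOME \<theta>. decomp ty zr ?V ?F \<theta>)"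
    have d': "decomp ty zr ?V ?F \<theta>'" unfolding \<theta>'_def using mixV unfolding is_mixed_def by (rule someI_ex)
    have "range \<theta>' \<subseteq> Pset ty zr ?V ?Y \<psi>" using D2[OF d' RFV] by blast
    then have "cspan ty zr ?V (range \<theta>') \<subseteq> Pset ty zr ?V ?Y \<psi>" by (rule cspan_Pset)
    then show ?thesis unfolding supp_def \<theta>'_def[symmetric] using Pset_eqq[OF YV psi types] by blast
  qed
  have ptF: "ptrace ty zr Xall (E \<union> U) ?F = ?F" by (rule ptrace_supported[OF Fsupp disj types])
  show "sat ty zr Xall E U (sem ty zr Xall
     (Seq
       (Seq (Init x) (Seq (Apply UK {x}) (Seq (Init w) (Seq (Apply U0 {w})
         (Seq (Apply (cnotK zr x w ex ew) {x, w}) (Seq (Init w) (Apply U0 {w})))))))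
       (Seq (Apply (ctrlK zr x y ex ey encM) {x, y})
            (Apply (ctrlK zr x y ex ey decM) {x, y}))) \<rho>) (eqq ty zr ?V ?Y \<psi>)"
    unfolding S sat_def using mixV sepF suppF ptF by blast
qed

end
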